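(* Let $R$ be a principal ideal domain and let $P$ be a lattice equipped with a compatible abelian group structure. Let $M=\bigoplus_{a\in P}M_a$ be a persistence module over $R$ indexed by $P$, viewed as a $P$-graded $R[U_0]$-module, such that each $M_a$ is a finitely generated $R$-module. Then $M$ is graded projective if and only if $M$ is graded free.
   Context: A lattice is a partially ordered set $(P,\le)$ in which every two elements $x,y$ have a join $x\vee y$ (least upper bound) and a meet $x\wedge y$ (greatest lower bound). $P$ has a compatible abelian group structure if $(P,+,0)$ is an abelian group and $a\le b$ implies $a+c\le b+c$ for all $a,b,c\in P$. Let $U_0=\{s\in P: s\ge 0\}$, a commutative monoid under $+$, and let $R[U_0]$ be its monoid ring: elements are finite formal sums $\sum_{s\in U_0}c_st^s$ with $c_s\in R$, $t^st^{s'}=t^{s+s'}$, graded by $\deg(ct^s)=s$. A persistence module over $R$ indexed by $P$ is a functor from $P$ (viewed as a category with a morphism $a\to b$ iff $a\le b$) to $R$-modules; equivalently a $P$-graded $R[U_0]$-module $M=\bigoplus_{a\in P}M_a$, where for $m\in M_a$ and $s\in U_0$, $t^s\cdot m$ is the image of $m$ under the structure map $M_a\to M_{a+s}$. Morphisms are degree-preserving $R[U_0]$-homomorphisms. $M$ is graded free if it has an $R[U_0]$-basis of homogeneous elements; $M$ is graded projective if it is a graded direct summand of a graded free module (equivalently, it has the lifting property against graded epimorphisms in the category of graded modules). *)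

theory Defs
  imports "HOL-Library.Lattice_Algebras" "HOL-Algebra.Module" "HOL-Algebra.Ring_Divisibility"
begin

definition lin_map ::
  "('r, 'c) ring_scheme \<Rightarrow> ('r, 'm) module \<Rightarrow> ('r, 'n) module \<Rightarrow> ('m \<Rightarrow> 'n) \<Rightarrow> bool" where
  "lin_map R M N f \<longleftrightarrow>
     f \<in> carrier M \<rightarrow> carrier N \<and>
     (\<forall>x\<in>carrier M. \<forall>y\<in>carrier M. f (x \<oplus>\<^bsub>M\<^esub> y) = f x \<oplus>\<^bsub>N\<^esub> f y) \<and>
     (\<forall>r\<in>carrier R. \<forall>x\<in>carrier M. f (r \<odot>\<^bsub>M\<^esub> x) = r \<odot>\<^bsub>N\<^esub> f x)"

definition persistence_module ::
  "('r, 'c) ring_scheme \<Rightarrow> ('p::order \<Rightarrow> ('r, 'm) module) \<Rightarrow> ('p \<Rightarrow> 'p \<Rightarrow> 'm \<Rightarrow> 'm) \<Rightarrow> bool" where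
  "persistence_module R M T \<longleftrightarrow>
     (\<forall>a. module R (M a)) \<and>
     (\<forall>a b. a \<le> b \<longrightarrow> lin_map R (M a) (M b) (T a b)) \<and>
     (\<forall>a. \<forall>x\<in>carrier (M a). T a a x = x) \<and>
     (\<forall>a b c. a \<le> b \<longrightarrow> b \<le> c \<longrightarrow> (\<forall>x\<in>carrier (M a). T b c (T a b x) = T a c x))"

text \<open>Morphisms of persistence modules (= degree-preserving R[U_0]-homomorphisms):
  natural transformations.\<close>
definition pmod_hom ::
  "('r, 'c) ring_scheme \<Rightarrow> ('p::order \<Rightarrow> ('r, 'm) module) \<Rightarrow> ('p \<Rightarrow> 'p \<Rightarrow> 'm \<Rightarrow> 'm)
   \<Rightarrow> ('p \<Rightarrow> ('r, 'n) module) \<Rightarrow> ('p \<Rightarrow> 'p \<Rightarrow> 'n \<Rightarrow> 'n) \<Rightarrow> ('p \<Rightarrow> 'm \<Rightarrow> 'n) \<Rightarrow> bool" where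
  "pmod_hom R M T N S h \<longleftrightarrow>
     (\<forall>a. lin_map R (M a) (N a) (h a)) \<and>
     (\<forall>a b. a \<le> b \<longrightarrow> (\<forall>x\<in>carrier (M a). h b (T a b x) = S a b (h a x)))"

text \<open>Graded free: there is a family B of homogeneous elements (pairs (degree, element))
  forming an R[U_0]-basis; equivalently, for every degree b the elements
  t^(b-a) e = T a b e, for (a,e) \<in> B with a \<le> b, form an R-basis (as an indexed family)
  of M b.\<close>
definition graded_free ::
  "('r, 'c) ring_scheme \<Rightarrow> ('p::ordered_ab_group_add \<Rightarrow> ('r, 'm) module) \<Rightarrow> ('p \<Rightarrow> 'p \<Rightarrow> 'm \<Rightarrow> 'm) \<Rightarrow> bool" where
  "graded_free R M T \<longleftrightarrow>
     (\<exists>B. B \<subseteq> {(a, x). x \<in> carrier (M a)} \<and>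
       (\<forall>b. (\<forall>y\<in>carrier (M b). \<exists>S c. finite S \<and> S \<subseteq> {i\<in>B. fst i \<le> b} \<and>
                 c \<in> S \<rightarrow> carrier R \<and>
                 y = finsum (M b) (\<lambda>i. c i \<odot>\<^bsub>M b\<^esub> T (fst i) b (snd i)) S) \<and>
            (\<forall>S c. finite S \<and> S \<subseteq> {i\<in>B. fst i \<le> b} \<and> c \<in> S \<rightarrow> carrier R \<and>
                 finsum (M b) (\<lambda>i. c i \<odot>\<^bsub>M b\<^esub> T (fst i) b (snd i)) S = \<zero>\<^bsub>M b\<^esub>
                 \<longrightarrow> (\<forall>i\<in>S. c i = \<zero>\<^bsub>R\<^esub>))))"

text \<open>Graded projective: M is (isomorphic to) a graded direct summand of a graded free
  module F, i.e. there are graded morphisms i : M \<rightarrow> F and p : F \<rightarrow> M with p \<circ> i = id.\<close>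
definition graded_projective ::
  "'f itself \<Rightarrow> ('r, 'c) ring_scheme \<Rightarrow> ('p::ordered_ab_group_add \<Rightarrow> ('r, 'm) module)
   \<Rightarrow> ('p \<Rightarrow> 'p \<Rightarrow> 'm \<Rightarrow> 'm) \<Rightarrow> bool" where
  "graded_projective _ R M T \<longleftrightarrow>
     (\<exists>(F :: 'p \<Rightarrow> ('r, 'f) module) S i p.
        persistence_module R F S \<and> graded_free R F S \<and>
        pmod_hom R M T F S i \<and> pmod_hom R F S M T p \<and>
        (\<forall>a. \<forall>x\<in>carrier (M a). p a (i a x) = x))"

definition fin_gen :: "('r, 'c) ring_scheme \<Rightarrow> ('r, 'm) module \<Rightarrow> bool" where
  "fin_gen R N \<longleftrightarrow>
     (\<exists>G. finite G \<and> G \<subseteq> carrier N \<and>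
        (\<forall>y\<in>carrier N. \<exists>c. c \<in> G \<rightarrow> carrier R \<and> y = finsum N (\<lambda>x. c x \<odot>\<^bsub>N\<^esub> x) G))"

end

theory Submission
  imports Defs
begin


definition lc :: "('r,'m,'x) module_scheme \<Rightarrow> ('i \<Rightarrow> 'm) \<Rightarrow> ('i \<Rightarrow> 'r) \<Rightarrow> 'i set \<Rightarrow> 'm" where
  "lc N v c S = finsum N (\<lambda>i. c i \<odot>\<^bsub>N\<^esub> v i) S"

context module
begin

lemma lc_closed[intro, simp]:
  "c \<in> S \<rightarrow> carrier R \<Longrightarrow> v \<in> S \<rightarrow> carrier M \<Longrightarrow> lc M v c S \<in> carrier M"
  unfolding lc_def by (rule M.finsum_closed) auto

lemma lc_empty[simp]: "lc M v c {} = \<zero>\<^bsub>M\<^esub>"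
  unfolding lc_def by simp

lemma lc_insert:
  "finite S \<Longrightarrow> i \<notin> S \<Longrightarrow> c \<in> insert i S \<rightarrow> carrier R \<Longrightarrow> v \<in> insert i S \<rightarrow> carrier M \<Longrightarrow>
   lc M v c (insert i S) = c i \<odot>\<^bsub>M\<^esub> v i \<oplus>\<^bsub>M\<^esub> lc M v c S"
  unfolding lc_def by (subst M.finsum_insert) auto

lemma lc_cong:
  "S = S' \<Longrightarrow> c' \<in> S' \<rightarrow> carrier R \<Longrightarrow> v' \<in> S' \<rightarrow> carrier M \<Longrightarrow> (\<And>i. i \<in> S' \<Longrightarrow> c i = c' i) \<Longrightarrow> (\<And>i. i \<in> S' \<Longrightarrow> v i = v' i) \<Longrightarrow>
   lc M v c S = lc M v' c' S'"
  unfolding lc_def by (rule M.add.finprod_cong') (auto simp: Pi_iff)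

lemma lc_cong_carrier:
  "c' \<in> S \<rightarrow> carrier R \<Longrightarrow> v' \<in> S \<rightarrow> carrier M \<Longrightarrow> (\<And>i. i \<in> S \<Longrightarrow> c i = c' i) \<Longrightarrow> (\<And>i. i \<in> S \<Longrightarrow> v i = v' i) \<Longrightarrow>
   lc M v c S = lc M v' c' S"
  by (rule lc_cong) auto

lemma lc_zero_ext:
  assumes "finite S'" "S \<subseteq> S'" "\<And>i. i \<in> S' - S \<Longrightarrow> c i = \<zero>"
    "c \<in> S' \<rightarrow> carrier R" "v \<in> S' \<rightarrow> carrier M"
  shows "lc M v c S' = lc M v c S"
  unfolding lc_def
  by (rule M.add.finprod_mono_neutral_cong_right) (use assms in \<open>auto simp: Pi_def\<close>)

lemma lc_add:
  assumes "c \<in> S \<rightarrow> carrier R" "d \<in> S \<rightarrow> carrier R" "v \<in> S \<rightarrow> carrier M"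
  shows "lc M v (\<lambda>i. c i \<oplus> d i) S = lc M v c S \<oplus>\<^bsub>M\<^esub> lc M v d S"
proof -
  have "lc M v (\<lambda>i. c i \<oplus> d i) S = finsum M (\<lambda>i. c i \<odot>\<^bsub>M\<^esub> v i \<oplus>\<^bsub>M\<^esub> d i \<odot>\<^bsub>M\<^esub> v i) S"
    unfolding lc_def by (rule M.add.finprod_cong') (use assms in \<open>auto simp: smult_l_distr Pi_iff\<close>)
  also have "\<dots> = lc M v c S \<oplus>\<^bsub>M\<^esub> lc M v d S"
    unfolding lc_def by (rule M.finsum_addf) (use assms in \<open>auto simp: Pi_iff\<close>)
  finally show ?thesis .
qed

lemma lc_smult:
  assumes "r \<in> carrier R" "c \<in> S \<rightarrow> carrier R" "v \<in> S \<rightarrow> carrier M" "finite S"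
  shows "r \<odot>\<^bsub>M\<^esub> lc M v c S = lc M v (\<lambda>i. r \<otimes> c i) S"
proof -
  have "r \<odot>\<^bsub>M\<^esub> lc M v c S = finsum M (\<lambda>i. r \<odot>\<^bsub>M\<^esub> (c i \<odot>\<^bsub>M\<^esub> v i)) S"
    unfolding lc_def by (rule finsum_smult_ldistr) (use assms in auto)
  also have "\<dots> = lc M v (\<lambda>i. r \<otimes> c i) S"
    unfolding lc_def by (rule M.add.finprod_cong') (use assms in \<open>auto simp: smult_assoc1 Pi_iff\<close>)
  finally show ?thesis .
qed

lemma lc_neg:
  assumes "c \<in> S \<rightarrow> carrier R" "v \<in> S \<rightarrow> carrier M" "finite S"
  shows "lc M v (\<lambda>i. \<ominus> c i) S = \<ominus>\<^bsub>M\<^esub> lc M v c S"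
proof -
  have "lc M v (\<lambda>i. \<ominus> c i) S = lc M v (\<lambda>i. (\<ominus> \<one>) \<otimes> c i) S"
    by (rule lc_cong) (use assms in \<open>auto simp: R.l_minus Pi_iff\<close>)
  also have "\<dots> = (\<ominus> \<one>) \<odot>\<^bsub>M\<^esub> lc M v c S"
    by (rule lc_smult[symmetric]) (use assms in auto)
  also have "\<dots> = \<ominus>\<^bsub>M\<^esub> lc M v c S"
    using assms by (simp add: smult_l_minus)
  finally show ?thesis .
qed

lemma lc_all_zero:
  assumes "\<And>i. i \<in> S \<Longrightarrow> c i = \<zero>" "v \<in> S \<rightarrow> carrier M"
  shows "lc M v c S = \<zero>\<^bsub>M\<^esub>"
proof -
  have "lc M v c S = finsum M (\<lambda>i. \<zero>\<^bsub>M\<^esub>) S"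
    unfolding lc_def by (rule M.add.finprod_cong') (use assms in \<open>auto simp: Pi_iff\<close>)
  then show ?thesis by simp
qed

end

lemma lin_map_zero:
  assumes "module R N" "module R N'" "lin_map R N N' f"
  shows "f \<zero>\<^bsub>N\<^esub> = \<zero>\<^bsub>N'\<^esub>"
proof -
  interpret N: module R N by fact
  interpret N': module R N' by fact
  have c: "f \<zero>\<^bsub>N\<^esub> \<in> carrier N'" using assms(3) unfolding lin_map_def by auto
  have "f \<zero>\<^bsub>N\<^esub> = f \<zero>\<^bsub>N\<^esub> \<oplus>\<^bsub>N'\<^esub> f \<zero>\<^bsub>N\<^esub>"
    using assms(3) unfolding lin_map_def by (metis N.M.zero_closed N.M.l_zero)
  then show ?thesis using c N'.M.add.l_cancel_one' by simp
qed

lemma lin_map_lc: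
  assumes "module R N" "module R N'" "lin_map R N N' f" "finite S"
    "c \<in> S \<rightarrow> carrier R" "v \<in> S \<rightarrow> carrier N"
  shows "f (lc N v c S) = lc N' (\<lambda>i. f (v i)) c S"
  using assms(4-6)
proof (induction S rule: finite_induct)
  case empty
  interpret N: module R N by fact
  interpret N': module R N' by fact
  show ?case using lin_map_zero[OF assms(1-3)] by simp
next
  case (insert x F)
  interpret N: module R N by fact
  interpret N': module R N' by fact
  have fc: "\<And>y. y \<in> carrier N \<Longrightarrow> f y \<in> carrier N'" using assms(3) unfolding lin_map_def by auto
  have "f (lc N v c (insert x F)) = f (c x \<odot>\<^bsub>N\<^esub> v x \<oplus>\<^bsub>N\<^esub> lc N v c F)"
    using insert by (simp add: N.lc_insert)
  also have "\<dots> = c x \<odot>\<^bsub>N'\<^esub> f (v x) \<oplus>\<^bsub>N'\<^esub> f (lc N v c F)"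
    using assms(3) insert unfolding lin_map_def by (auto simp: N.lc_closed)
  also have "\<dots> = lc N' (\<lambda>i. f (v i)) c (insert x F)"
    using insert fc by (subst N'.lc_insert) auto
  finally show ?case .
qed


definition coefs :: "('r,'c) ring_scheme \<Rightarrow> ('r,'m,'x) module_scheme \<Rightarrow> ('i \<Rightarrow> 'm) \<Rightarrow> 'i set \<Rightarrow> 'm \<Rightarrow> 'i \<Rightarrow> 'r" where
  "coefs R N v J y = (SOME c. (\<forall>i. c i \<in> carrier R) \<and> finite {i. c i \<noteq> \<zero>\<^bsub>R\<^esub>} \<and>
      {i. c i \<noteq> \<zero>\<^bsub>R\<^esub>} \<subseteq> J \<and> y = lc N v c {i. c i \<noteq> \<zero>\<^bsub>R\<^esub>})"

locale basis_mod = module +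
  fixes v :: "'i \<Rightarrow> 'c" and J :: "'i set"
  assumes v_carr: "\<And>i. i \<in> J \<Longrightarrow> v i \<in> carrier M"
    and spans: "\<And>y. y \<in> carrier M \<Longrightarrow> \<exists>S c. finite S \<and> S \<subseteq> J \<and> c \<in> S \<rightarrow> carrier R \<and> y = lc M v c S"
    and indep: "\<And>S c. finite S \<Longrightarrow> S \<subseteq> J \<Longrightarrow> c \<in> S \<rightarrow> carrier R \<Longrightarrow> lc M v c S = \<zero>\<^bsub>M\<^esub> \<Longrightarrow> \<forall>i\<in>S. c i = \<zero>"
begin

abbreviation "coef \<equiv> coefs R M v J"

lemma v_Pi: "S \<subseteq> J \<Longrightarrow> v \<in> S \<rightarrow> carrier M"
  using v_carr by auto

lemma uniq_aux:
  assumes S: "finite S" "S \<subseteq> J" "c \<in> S \<rightarrow> carrier R"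
    and S': "finite S'" "S' \<subseteq> J" "c' \<in> S' \<rightarrow> carrier R"
    and eq: "lc M v c S = lc M v c' S'"
  shows "\<And>i. i \<in> S \<union> S' \<Longrightarrow> (if i \<in> S then c i else \<zero>) = (if i \<in> S' then c' i else \<zero>)"
proof -
  define U where "U = S \<union> S'"
  define d where "d = (\<lambda>i. if i \<in> S then c i else \<zero>)"
  define d' where "d' = (\<lambda>i. if i \<in> S' then c' i else \<zero>)"
  have U: "finite U" "U \<subseteq> J" using S S' U_def by auto
  have dc: "d \<in> U \<rightarrow> carrier R" "d' \<in> U \<rightarrow> carrier R" using S S' unfolding d_def d'_def by auto
  have vU: "v \<in> U \<rightarrow> carrier M" using v_Pi U by auto
  have "lc M v d U = lc M v d S"
    by (rule lc_zero_ext) (use U dc vU in \<open>auto simp: U_def d_def\<close>)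
  also have "\<dots> = lc M v c S"
    by (rule lc_cong) (use S v_Pi in \<open>auto simp: d_def\<close>)
  finally have 1: "lc M v d U = lc M v c S" .
  have "lc M v d' U = lc M v d' S'"
    by (rule lc_zero_ext) (use U dc vU in \<open>auto simp: U_def d'_def\<close>)
  also have "\<dots> = lc M v c' S'"
    by (rule lc_cong) (use S' v_Pi in \<open>auto simp: d'_def\<close>)
  finally have 2: "lc M v d' U = lc M v c' S'" .
  have "lc M v (\<lambda>i. d i \<oplus> (\<ominus> d' i)) U = lc M v d U \<oplus>\<^bsub>M\<^esub> lc M v (\<lambda>i. \<ominus> d' i) U"
    by (rule lc_add) (use dc vU in auto)
  also have "\<dots> = lc M v d U \<oplus>\<^bsub>M\<^esub> (\<ominus>\<^bsub>M\<^esub> lc M v d' U)"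
    by (simp add: lc_neg[OF dc(2) vU U(1)])
  also have "\<dots> = \<zero>\<^bsub>M\<^esub>" using 1 2 eq dc vU S'(3) v_Pi[OF S'(2)] by (simp add: M.r_neg)
  finally have "\<forall>i\<in>U. d i \<oplus> (\<ominus> d' i) = \<zero>"
    by (intro indep U) (use dc in auto)
  then have "\<forall>i\<in>U. d i = d' i"
  proof (intro ballI)
    fix i assume i: "i \<in> U" and h: "\<forall>i\<in>U. d i \<oplus> (\<ominus> d' i) = \<zero>"
    then have e: "d i \<oplus> (\<ominus> d' i) = \<zero>" by blast
    have c: "d i \<in> carrier R" "d' i \<in> carrier R" using dc i by auto
    have "\<ominus> (\<ominus> d' i) = d i" by (rule R.minus_equality[OF e]) (use c in auto)
    then show "d i = d' i" using c by (simp add: R.minus_minus)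
  qed
  then show "\<And>i. i \<in> S \<union> S' \<Longrightarrow> (if i \<in> S then c i else \<zero>) = (if i \<in> S' then c' i else \<zero>)"
    unfolding U_def d_def d'_def by blast
qed

lemma coef_ex:
  assumes "y \<in> carrier M"
  shows "\<exists>c. (\<forall>i. c i \<in> carrier R) \<and> finite {i. c i \<noteq> \<zero>} \<and> {i. c i \<noteq> \<zero>} \<subseteq> J \<and> y = lc M v c {i. c i \<noteq> \<zero>}"
proof -
  obtain S c where S: "finite S" "S \<subseteq> J" "c \<in> S \<rightarrow> carrier R" "y = lc M v c S"
    using spans[OF assms] by blast
  define d where "d = (\<lambda>i. if i \<in> S then c i else \<zero>)"
  have sub: "{i. d i \<noteq> \<zero>} \<subseteq> S" unfolding d_def by auto
  have fin: "finite {i. d i \<noteq> \<zero>}" using sub S finite_subset by blast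
  have dc: "\<forall>i. d i \<in> carrier R" using S unfolding d_def by auto
  have "lc M v d S = lc M v d {i. d i \<noteq> \<zero>}"
    by (rule lc_zero_ext) (use S sub dc v_Pi in auto)
  moreover have "lc M v d S = lc M v c S"
    by (rule lc_cong) (use S v_Pi in \<open>auto simp: d_def\<close>)
  then have "lc M v d S = y" using S(4) by simp
  ultimately show ?thesis using dc fin sub S by auto
qed

lemma coef_props:
  assumes "y \<in> carrier M"
  shows "\<forall>i. coef y i \<in> carrier R" "finite {i. coef y i \<noteq> \<zero>}" "{i. coef y i \<noteq> \<zero>} \<subseteq> J"
    "y = lc M v (coef y) {i. coef y i \<noteq> \<zero>}"
  using someI_ex[OF coef_ex[OF assms]] unfolding coefs_def by blast+

lemma coef_carr[simp]: "y \<in> carrier M \<Longrightarrow> coef y i \<in> carrier R"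
  using coef_props by auto

lemma coef_repr:
  assumes "y \<in> carrier M" "finite S" "S \<subseteq> J" "{i. coef y i \<noteq> \<zero>} \<subseteq> S"
  shows "y = lc M v (coef y) S"
proof -
  have "lc M v (coef y) S = lc M v (coef y) {i. coef y i \<noteq> \<zero>}"
    by (rule lc_zero_ext) (use assms v_Pi in auto)
  then show ?thesis using coef_props(4)[OF assms(1)] by simp
qed

lemma coef_unique:
  assumes "finite S" "S \<subseteq> J" "c \<in> S \<rightarrow> carrier R" "y = lc M v c S"
  shows "\<And>i. i \<in> S \<Longrightarrow> coef y i = c i" "\<And>i. i \<notin> S \<Longrightarrow> coef y i = \<zero>"
proof -
  have y: "y \<in> carrier M" using assms v_Pi by auto
  note cp = coef_props[OF y]
  have cc: "coef y \<in> {i. coef y i \<noteq> \<zero>} \<rightarrow> carrier R" using cp by auto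
  note u = uniq_aux[OF assms(1-3) cp(2,3) cc, folded assms(4), OF cp(4)]
  show "\<And>i. i \<in> S \<Longrightarrow> coef y i = c i"
  proof -
    fix i assume i: "i \<in> S"
    show "coef y i = c i"
      using u[of i] i by (cases "coef y i = \<zero>") auto
  qed
  show "\<And>i. i \<notin> S \<Longrightarrow> coef y i = \<zero>"
  proof (rule ccontr)
    fix i assume i: "i \<notin> S" "coef y i \<noteq> \<zero>"
    then show False using u[of i] by auto
  qed
qed

lemma coef_zero: "coef \<zero>\<^bsub>M\<^esub> i = \<zero>"
  using coef_unique(2)[of "{}" "\<lambda>_. \<zero>" "\<zero>\<^bsub>M\<^esub>" i] by simp

lemma supp_fin: "y \<in> carrier M \<Longrightarrow> finite {i. coef y i \<noteq> \<zero>}"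
  using coef_props by auto

lemma supp_J: "y \<in> carrier M \<Longrightarrow> {i. coef y i \<noteq> \<zero>} \<subseteq> J"
  using coef_props by auto

lemma coef_add:
  assumes x: "x \<in> carrier M" and y: "y \<in> carrier M"
  shows "coef (x \<oplus>\<^bsub>M\<^esub> y) i = coef x i \<oplus> coef y i"
proof -
  define U where "U = {i. coef x i \<noteq> \<zero>} \<union> {i. coef y i \<noteq> \<zero>}"
  have U: "finite U" "U \<subseteq> J" using supp_fin supp_J x y U_def by auto
  have ex: "x = lc M v (coef x) U" by (rule coef_repr[OF x U]) (auto simp: U_def)
  have ey: "y = lc M v (coef y) U" by (rule coef_repr[OF y U]) (auto simp: U_def)
  have "x \<oplus>\<^bsub>M\<^esub> y = lc M v (coef x) U \<oplus>\<^bsub>M\<^esub> lc M v (coef y) U"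
    by (rule arg_cong2[where f="(\<oplus>\<^bsub>M\<^esub>)", OF ex ey])
  also have "\<dots> = lc M v (\<lambda>i. coef x i \<oplus> coef y i) U"
    by (rule lc_add[symmetric]) (use x y U v_Pi in auto)
  finally have e: "x \<oplus>\<^bsub>M\<^esub> y = lc M v (\<lambda>i. coef x i \<oplus> coef y i) U" .
  show ?thesis
  proof (cases "i \<in> U")
    case True
    then show ?thesis using coef_unique(1)[OF U _ e] x y by auto
  next
    case False
    then show ?thesis using coef_unique(2)[OF U _ e] x y U_def by auto
  qed
qed

lemma coef_smult:
  assumes r: "r \<in> carrier R" and x: "x \<in> carrier M"
  shows "coef (r \<odot>\<^bsub>M\<^esub> x) i = r \<otimes> coef x i"
proof -
  define U where "U = {i. coef x i \<noteq> \<zero>}"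
  have U: "finite U" "U \<subseteq> J" using supp_fin supp_J x U_def by auto
  have ex: "x = lc M v (coef x) U" by (rule coef_repr[OF x U]) (auto simp: U_def)
  have "r \<odot>\<^bsub>M\<^esub> x = r \<odot>\<^bsub>M\<^esub> lc M v (coef x) U"
    by (rule arg_cong[where f="\<lambda>z. r \<odot>\<^bsub>M\<^esub> z", OF ex])
  also have "\<dots> = lc M v (\<lambda>i. r \<otimes> coef x i) U"
    by (rule lc_smult) (use x r U v_Pi in auto)
  finally have e: "r \<odot>\<^bsub>M\<^esub> x = lc M v (\<lambda>i. r \<otimes> coef x i) U" .
  show ?thesis
  proof (cases "i \<in> U")
    case True
    then show ?thesis using coef_unique(1)[OF U _ e] x r by auto
  next
    case False
    then show ?thesis using coef_unique(2)[OF U _ e] x r U_def by auto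
  qed
qed

lemma coef_lc:
  assumes "finite K" "a \<in> K \<rightarrow> carrier R" "w \<in> K \<rightarrow> carrier M"
  shows "coef (lc M w a K) i = finsum R (\<lambda>k. a k \<otimes> coef (w k) i) K"
  using assms
proof (induction K rule: finite_induct)
  case empty
  then show ?case by (simp add: coef_zero)
next
  case (insert x F)
  have "coef (lc M w a (insert x F)) i = coef (a x \<odot>\<^bsub>M\<^esub> w x \<oplus>\<^bsub>M\<^esub> lc M w a F) i"
    using insert by (simp add: lc_insert)
  also have "\<dots> = a x \<otimes> coef (w x) i \<oplus> coef (lc M w a F) i"
    using insert by (simp add: coef_add coef_smult)
  also have "\<dots> = finsum R (\<lambda>k. a k \<otimes> coef (w k) i) (insert x F)"
    using insert by (subst R.finsum_insert) (auto simp: Pi_iff)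
  finally show ?case .
qed

end


context principal_domain
begin

lemma img_ideal:
  assumes car: "\<forall>x\<in>X. \<forall>i. \<phi> x i \<in> carrier R"
    and zer: "\<exists>z\<in>X. \<forall>i. \<phi> z i = \<zero>"
    and add: "\<forall>x\<in>X. \<forall>y\<in>X. \<exists>z\<in>X. \<forall>i. \<phi> z i = \<phi> x i \<oplus> \<phi> y i"
    and smul: "\<forall>r\<in>carrier R. \<forall>x\<in>X. \<exists>z\<in>X. \<forall>i. \<phi> z i = r \<otimes> \<phi> x i"
  shows "ideal ((\<lambda>x. \<phi> x a) ` X) R"
proof (intro subgroup.intro idealI[OF ring_axioms], simp_all)
  show "(\<lambda>x. \<phi> x a) ` X \<subseteq> carrier R" using car by blast
  show "\<And>x y. x \<in> (\<lambda>x. \<phi> x a) ` X \<Longrightarrow> y \<in> (\<lambda>x. \<phi> x a) ` X \<Longrightarrow> x \<oplus> y \<in> (\<lambda>x. \<phi> x a) ` X"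
  proof -
    fix x y assume hx: "x \<in> (\<lambda>x. \<phi> x a) ` X" and hy: "y \<in> (\<lambda>x. \<phi> x a) ` X"
    from hx obtain x' where x': "x' \<in> X" "x = \<phi> x' a" by blast
    from hy obtain y' where y': "y' \<in> X" "y = \<phi> y' a" by blast
    from add x'(1) y'(1) obtain z where z: "z \<in> X" "\<forall>i. \<phi> z i = \<phi> x' i \<oplus> \<phi> y' i" by blast
    have "x \<oplus> y = \<phi> z a" using x'(2) y'(2) z(2) by simp
    then show "x \<oplus> y \<in> (\<lambda>x. \<phi> x a) ` X" using z(1) by blast
  qed
  show "\<zero> \<in> (\<lambda>x. \<phi> x a) ` X"
  proof -
    obtain z where "z \<in> X" "\<forall>i. \<phi> z i = \<zero>" using zer by blast
    then show ?thesis by (metis (no_types, lifting) image_eqI)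
  qed
  show "\<And>x. x \<in> (\<lambda>x. \<phi> x a) ` X \<Longrightarrow> inv\<^bsub>add_monoid R\<^esub> x \<in> (\<lambda>x. \<phi> x a) ` X"
  proof -
    fix x assume "x \<in> (\<lambda>x. \<phi> x a) ` X"
    then obtain y where y: "y \<in> X" "x = \<phi> y a" by blast
    have m1: "\<ominus> \<one> \<in> carrier R" by simp
    from smul m1 y(1) obtain z where z: "z \<in> X" "\<forall>i. \<phi> z i = (\<ominus> \<one>) \<otimes> \<phi> y i" by blast
    have yc: "\<phi> y a \<in> carrier R" using car y(1) by blast
    have "\<phi> z a = \<ominus> x" using z(2) y(2) yc by (simp add: l_minus)
    moreover have "inv\<^bsub>add_monoid R\<^esub> x = \<ominus> x" by (simp add: a_inv_def)
    ultimately have "inv\<^bsub>add_monoid R\<^esub> x = \<phi> z a" by simp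
    then show "inv\<^bsub>add_monoid R\<^esub> x \<in> (\<lambda>x. \<phi> x a) ` X" using z(1) by blast
  qed
  show "\<And>b x. b \<in> (\<lambda>x. \<phi> x a) ` X \<Longrightarrow> x \<in> carrier R \<Longrightarrow> x \<otimes> b \<in> (\<lambda>x. \<phi> x a) ` X"
  proof -
    fix b x assume hb: "b \<in> (\<lambda>x. \<phi> x a) ` X" and xc: "x \<in> carrier R"
    then obtain y where y: "y \<in> X" "b = \<phi> y a" by blast
    from smul xc y(1) obtain z where z: "z \<in> X" "\<forall>i. \<phi> z i = x \<otimes> \<phi> y i" by blast
    have "x \<otimes> b = \<phi> z a" using z(2) y(2) by simp
    then show "x \<otimes> b \<in> (\<lambda>x. \<phi> x a) ` X" using z(1) by blast
  qed
  show "\<And>b x. b \<in> (\<lambda>x. \<phi> x a) ` X \<Longrightarrow> x \<in> carrier R \<Longrightarrow> b \<otimes> x \<in> (\<lambda>x. \<phi> x a) ` X"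
  proof -
    fix b x assume hb: "b \<in> (\<lambda>x. \<phi> x a) ` X" and xc: "x \<in> carrier R"
    then obtain y where y: "y \<in> X" "b = \<phi> y a" by blast
    from smul xc y(1) obtain z where z: "z \<in> X" "\<forall>i. \<phi> z i = x \<otimes> \<phi> y i" by blast
    have bc: "b \<in> carrier R" using y car by blast
    have e1: "b \<otimes> x = x \<otimes> b" using bc xc by (rule m_comm)
    have e2: "\<phi> z a = x \<otimes> b" using z(2) y(2) by simp
    from e1 e2[symmetric] have "b \<otimes> x = \<phi> z a" by (rule trans)
    then show "b \<otimes> x \<in> (\<lambda>x. \<phi> x a) ` X" using z(1) by blast
  qed
qed

lemma aux_cancel: "p \<in> carrier R \<Longrightarrow> q \<in> carrier R \<Longrightarrow> p \<oplus> (q \<oplus> \<ominus> p) = q"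
  by (simp add: a_lcomm[of p q] r_neg)

lemma pid_basis:
  assumes "finite I"
  shows "\<And>X. \<forall>x\<in>X. \<forall>i. \<phi> x i \<in> carrier R \<Longrightarrow>
    \<forall>x\<in>X. \<forall>i. i \<notin> I \<longrightarrow> \<phi> x i = \<zero> \<Longrightarrow>
    \<exists>z\<in>X. \<forall>i. \<phi> z i = \<zero> \<Longrightarrow>
    \<forall>x\<in>X. \<forall>y\<in>X. \<exists>z\<in>X. \<forall>i. \<phi> z i = \<phi> x i \<oplus> \<phi> y i \<Longrightarrow>
    \<forall>r\<in>carrier R. \<forall>x\<in>X. \<exists>z\<in>X. \<forall>i. \<phi> z i = r \<otimes> \<phi> x i \<Longrightarrow>
    \<exists>G. finite G \<and> G \<subseteq> X \<and>
      (\<forall>x\<in>X. \<exists>c\<in>G \<rightarrow> carrier R. \<forall>i. \<phi> x i = finsum R (\<lambda>g. c g \<otimes> \<phi> g i) G) \<and>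
      (\<forall>c\<in>G \<rightarrow> carrier R. (\<forall>i. finsum R (\<lambda>g. c g \<otimes> \<phi> g i) G = \<zero>) \<longrightarrow> (\<forall>g\<in>G. c g = \<zero>))"
  using assms
proof (induction I rule: finite_induct)
  case empty
  show ?case
    by (rule exI[of _ "{}"]) (use empty in auto)
next
  case (insert a I X)
  note car = insert.prems(1) and out = insert.prems(2) and zer = insert.prems(3)
    and add = insert.prems(4) and smul = insert.prems(5)
  define X' where "X' = {x \<in> X. \<phi> x a = \<zero>}"
  have "\<exists>G. finite G \<and> G \<subseteq> X' \<and>
      (\<forall>x\<in>X'. \<exists>c\<in>G \<rightarrow> carrier R. \<forall>i. \<phi> x i = finsum R (\<lambda>g. c g \<otimes> \<phi> g i) G) \<and>
      (\<forall>c\<in>G \<rightarrow> carrier R. (\<forall>i. finsum R (\<lambda>g. c g \<otimes> \<phi> g i) G = \<zero>) \<longrightarrow> (\<forall>g\<in>G. c g = \<zero>))"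
  proof (rule insert.IH)
    show "\<forall>x\<in>X'. \<forall>i. \<phi> x i \<in> carrier R" using car X'_def by auto
    show "\<forall>x\<in>X'. \<forall>i. i \<notin> I \<longrightarrow> \<phi> x i = \<zero>" using out X'_def by auto
    show "\<exists>z\<in>X'. \<forall>i. \<phi> z i = \<zero>" using zer X'_def by auto
    show "\<forall>x\<in>X'. \<forall>y\<in>X'. \<exists>z\<in>X'. \<forall>i. \<phi> z i = \<phi> x i \<oplus> \<phi> y i"
    proof (intro ballI)
      fix x y assume "x \<in> X'" "y \<in> X'"
      then obtain z where "z \<in> X" "\<forall>i. \<phi> z i = \<phi> x i \<oplus> \<phi> y i" using add X'_def by force
      then show "\<exists>z\<in>X'. \<forall>i. \<phi> z i = \<phi> x i \<oplus> \<phi> y i" using \<open>x \<in> X'\<close> \<open>y \<in> X'\<close> X'_def by auto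
    qed
    show "\<forall>r\<in>carrier R. \<forall>x\<in>X'. \<exists>z\<in>X'. \<forall>i. \<phi> z i = r \<otimes> \<phi> x i"
    proof (intro ballI)
      fix r x assume "r \<in> carrier R" "x \<in> X'"
      then obtain z where "z \<in> X" "\<forall>i. \<phi> z i = r \<otimes> \<phi> x i" using smul X'_def by force
      then show "\<exists>z\<in>X'. \<forall>i. \<phi> z i = r \<otimes> \<phi> x i" using \<open>r \<in> carrier R\<close> \<open>x \<in> X'\<close> X'_def by auto
    qed
  qed
  then obtain G' where G': "finite G'" "G' \<subseteq> X'"
    "\<forall>x\<in>X'. \<exists>c\<in>G' \<rightarrow> carrier R. \<forall>i. \<phi> x i = finsum R (\<lambda>g. c g \<otimes> \<phi> g i) G'"
    "\<forall>c\<in>G' \<rightarrow> carrier R. (\<forall>i. finsum R (\<lambda>g. c g \<otimes> \<phi> g i) G' = \<zero>) \<longrightarrow> (\<forall>g\<in>G'. c g = \<zero>)"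
    by blast
  have id: "ideal ((\<lambda>x. \<phi> x a) ` X) R" by (rule img_ideal[OF car zer add smul])
  obtain d where d: "d \<in> carrier R" "(\<lambda>x. \<phi> x a) ` X = PIdl d" using exists_gen[OF id] by blast
  show ?case
  proof (cases "d = \<zero>")
    case True
    have "X' = X"
    proof -
      have "\<And>x. x \<in> X \<Longrightarrow> \<phi> x a = \<zero>"
      proof -
        fix x assume "x \<in> X"
        then have "\<phi> x a \<in> PIdl d" using d by auto
        then show "\<phi> x a = \<zero>" using True unfolding cgenideal_def by auto
      qed
      then show ?thesis unfolding X'_def by auto
    qed
    then show ?thesis using G' by auto
  next
    case False
    have "d \<in> PIdl d" unfolding cgenideal_def using d by (auto intro: exI[of _ \<one>])
    then have "d \<in> (\<lambda>x. \<phi> x a) ` X" using d(2) by simp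
    then obtain x0 where x0: "x0 \<in> X" "\<phi> x0 a = d" by blast
    have x0G: "x0 \<notin> G'" using x0 False G'(2) X'_def by auto
    have gc: "\<And>g i. g \<in> insert x0 G' \<Longrightarrow> \<phi> g i \<in> carrier R" using car x0 G'(2) X'_def by auto
    have ga: "\<And>g. g \<in> G' \<Longrightarrow> \<phi> g a = \<zero>" using G'(2) X'_def by auto
    show ?thesis
    proof (intro exI[of _ "insert x0 G'"] conjI)
      show "finite (insert x0 G')" using G' by auto
      show "insert x0 G' \<subseteq> X" using G' x0 X'_def by auto
      show "\<forall>x\<in>X. \<exists>c\<in>insert x0 G' \<rightarrow> carrier R. \<forall>i. \<phi> x i = finsum R (\<lambda>g. c g \<otimes> \<phi> g i) (insert x0 G')"
      proof
        fix x assume x: "x \<in> X"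
        then have "\<phi> x a \<in> PIdl d" using d by auto
        then obtain r where r: "r \<in> carrier R" "\<phi> x a = r \<otimes> d" unfolding cgenideal_def by auto
        have mr: "\<ominus> r \<in> carrier R" using r by simp
        obtain y where y: "y \<in> X" "\<forall>i. \<phi> y i = (\<ominus> r) \<otimes> \<phi> x0 i" using smul mr x0(1) by blast
        obtain z where z: "z \<in> X" "\<forall>i. \<phi> z i = \<phi> x i \<oplus> \<phi> y i" using add x y(1) by blast
        have "\<phi> z a = \<zero>" using z y r x0 d by (simp add: l_minus r_neg)
        then have "z \<in> X'" using z X'_def by auto
        then obtain c' where c': "c' \<in> G' \<rightarrow> carrier R" "\<forall>i. \<phi> z i = finsum R (\<lambda>g. c' g \<otimes> \<phi> g i) G'"
          using G'(3) by blast
        define c where "c = c'(x0 := r)"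
        have cc: "c \<in> insert x0 G' \<rightarrow> carrier R" using c' r c_def by auto
        have "\<forall>i. \<phi> x i = finsum R (\<lambda>g. c g \<otimes> \<phi> g i) (insert x0 G')"
        proof
          fix i
          have cx: "\<phi> x i \<in> carrier R" "\<phi> x0 i \<in> carrier R" using car x x0 by auto
          have fs: "finsum R (\<lambda>g. c g \<otimes> \<phi> g i) G' = finsum R (\<lambda>g. c' g \<otimes> \<phi> g i) G'"
            by (rule finsum_cong') (use c' gc x0G in \<open>auto simp: c_def\<close>)
          have fc: "(\<lambda>g. c g \<otimes> \<phi> g i) \<in> G' \<rightarrow> carrier R" using cc gc by (auto simp: Pi_iff)
          have "finsum R (\<lambda>g. c g \<otimes> \<phi> g i) (insert x0 G') = c x0 \<otimes> \<phi> x0 i \<oplus> finsum R (\<lambda>g. c g \<otimes> \<phi> g i) G'"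
            by (rule finsum_insert[OF G'(1) x0G fc]) (use cc gc in auto)
          also have "\<dots> = r \<otimes> \<phi> x0 i \<oplus> \<phi> z i" using fs c'(2) by (simp add: c_def)
          finally have "finsum R (\<lambda>g. c g \<otimes> \<phi> g i) (insert x0 G') = r \<otimes> \<phi> x0 i \<oplus> \<phi> z i" .
          also have "\<dots> = \<phi> x i" using z y r cx
            by (simp add: l_minus aux_cancel)
          finally show "\<phi> x i = finsum R (\<lambda>g. c g \<otimes> \<phi> g i) (insert x0 G')" by simp
        qed
        then show "\<exists>c\<in>insert x0 G' \<rightarrow> carrier R. \<forall>i. \<phi> x i = finsum R (\<lambda>g. c g \<otimes> \<phi> g i) (insert x0 G')"
          using cc by blast
      qed
      show "\<forall>c\<in>insert x0 G' \<rightarrow> carrier R. (\<forall>i. finsum R (\<lambda>g. c g \<otimes> \<phi> g i) (insert x0 G') = \<zero>) \<longrightarrow>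
          (\<forall>g\<in>insert x0 G'. c g = \<zero>)"
      proof (intro ballI impI)
        fix c g assume cc: "c \<in> insert x0 G' \<rightarrow> carrier R"
          and h: "\<forall>i. finsum R (\<lambda>g. c g \<otimes> \<phi> g i) (insert x0 G') = \<zero>" and g: "g \<in> insert x0 G'"
        have split: "\<And>i. finsum R (\<lambda>g. c g \<otimes> \<phi> g i) (insert x0 G') =
            c x0 \<otimes> \<phi> x0 i \<oplus> finsum R (\<lambda>g. c g \<otimes> \<phi> g i) G'"
          using G'(1) x0G cc gc by (subst finsum_insert) auto
        have z0: "\<And>g. g \<in> G' \<Longrightarrow> c g \<otimes> \<phi> g a = \<zero>"
        proof -
          fix g assume "g \<in> G'"
          then have "c g \<in> carrier R" "\<phi> g a = \<zero>" using cc ga by auto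
          then show "c g \<otimes> \<phi> g a = \<zero>" by simp
        qed
        have "finsum R (\<lambda>g. c g \<otimes> \<phi> g a) G' = finsum R (\<lambda>g. \<zero>) G'"
          by (rule finsum_cong') (use z0 in auto)
        then have "finsum R (\<lambda>g. c g \<otimes> \<phi> g a) G' = \<zero>" by simp
        then have "c x0 \<otimes> d = \<zero>" using h split[of a] x0 cc d by simp
        then have c0: "c x0 = \<zero>" using False cc d integral by blast
        have "\<forall>i. finsum R (\<lambda>g. c g \<otimes> \<phi> g i) G' = \<zero>"
        proof
          fix i
          have "finsum R (\<lambda>g. c g \<otimes> \<phi> g i) G' \<in> carrier R" using cc gc by (intro finsum_closed) auto
          then show "finsum R (\<lambda>g. c g \<otimes> \<phi> g i) G' = \<zero>" using h split[of i] c0 gc by simp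
        qed
        moreover have "c \<in> G' \<rightarrow> carrier R" using cc by auto
        ultimately have "\<forall>g\<in>G'. c g = \<zero>" using G'(4) by blast
        then show "c g = \<zero>" using g c0 by auto
      qed
    qed
  qed
qed

end


definition vF :: "('p \<Rightarrow> 'p \<Rightarrow> 'f \<Rightarrow> 'f) \<Rightarrow> 'p \<Rightarrow> 'p \<times> 'f \<Rightarrow> 'f" where
  "vF S b i = S (fst i) b (snd i)"

locale gfree =
  fixes R :: "('r, 'c) ring_scheme"
    and F :: "'p::lattice_ab_group_add \<Rightarrow> ('r, 'f) module"
    and S :: "'p \<Rightarrow> 'p \<Rightarrow> 'f \<Rightarrow> 'f"
    and B :: "('p \<times> 'f) set"
  assumes pmF: "persistence_module R F S"
    and BF: "B \<subseteq> {(a, x). x \<in> carrier (F a)}"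
    and spanF: "\<And>b y. y \<in> carrier (F b) \<Longrightarrow> \<exists>S' c. finite S' \<and> S' \<subseteq> {i\<in>B. fst i \<le> b} \<and>
                 c \<in> S' \<rightarrow> carrier R \<and> y = lc (F b) (vF S b) c S'"
    and indepF: "\<And>b S' c. finite S' \<Longrightarrow> S' \<subseteq> {i\<in>B. fst i \<le> b} \<Longrightarrow> c \<in> S' \<rightarrow> carrier R \<Longrightarrow>
                 lc (F b) (vF S b) c S' = \<zero>\<^bsub>F b\<^esub> \<Longrightarrow> \<forall>i\<in>S'. c i = \<zero>\<^bsub>R\<^esub>"
begin

lemma modF: "module R (F a)" using pmF unfolding persistence_module_def by auto

lemma linS: "a \<le> b \<Longrightarrow> lin_map R (F a) (F b) (S a b)" using pmF unfolding persistence_module_def by auto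

lemma S_carr: assumes "a \<le> b" "y \<in> carrier (F a)" shows "S a b y \<in> carrier (F b)"
  using linS[OF assms(1)] assms(2) unfolding lin_map_def by blast

lemma B_carr: "i \<in> B \<Longrightarrow> snd i \<in> carrier (F (fst i))"
  using BF by auto

lemma vF_carr: "i \<in> B \<Longrightarrow> fst i \<le> b \<Longrightarrow> vF S b i \<in> carrier (F b)"
  unfolding vF_def using S_carr B_carr by blast

lemma vF_Pi: "U \<subseteq> {i\<in>B. fst i \<le> b} \<Longrightarrow> vF S b \<in> U \<rightarrow> carrier (F b)"
  using vF_carr by blast

lemma S_comp: "a \<le> b \<Longrightarrow> b \<le> c \<Longrightarrow> y \<in> carrier (F a) \<Longrightarrow> S b c (S a b y) = S a c y"
  using pmF unfolding persistence_module_def by auto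

lemma basisF: "basis_mod R (F b) (vF S b) {i\<in>B. fst i \<le> b}"
proof -
  interpret module R "F b" by (rule modF)
  show ?thesis
  proof (unfold_locales)
    show "\<And>i. i \<in> {i \<in> B. fst i \<le> b} \<Longrightarrow> vF S b i \<in> carrier (F b)"
      using vF_carr by blast
    show "\<And>y. y \<in> carrier (F b) \<Longrightarrow> \<exists>S' c. finite S' \<and> S' \<subseteq> {i \<in> B. fst i \<le> b} \<and> c \<in> S' \<rightarrow> carrier R \<and> y = lc (F b) (vF S b) c S'"
      using spanF by blast
    show "\<And>Sa c. finite Sa \<Longrightarrow> Sa \<subseteq> {i \<in> B. fst i \<le> b} \<Longrightarrow> c \<in> Sa \<rightarrow> carrier R \<Longrightarrow> lc (F b) (vF S b) c Sa = \<zero>\<^bsub>F b\<^esub> \<Longrightarrow> \<forall>i\<in>Sa. c i = \<zero>\<^bsub>R\<^esub>"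
      using indepF by blast
  qed
qed

definition cf :: "'p \<Rightarrow> 'f \<Rightarrow> 'p \<times> 'f \<Rightarrow> 'r" where
  "cf b = coefs R (F b) (vF S b) {i\<in>B. fst i \<le> b}"

lemma cf_carr: "y \<in> carrier (F b) \<Longrightarrow> cf b y i \<in> carrier R"
  unfolding cf_def using basis_mod.coef_carr[OF basisF] by blast

lemma cf_supp: "y \<in> carrier (F b) \<Longrightarrow> cf b y i \<noteq> \<zero>\<^bsub>R\<^esub> \<Longrightarrow> i \<in> B \<and> fst i \<le> b"
  unfolding cf_def using basis_mod.supp_J[OF basisF] by blast

lemma cf_fin: "y \<in> carrier (F b) \<Longrightarrow> finite {i. cf b y i \<noteq> \<zero>\<^bsub>R\<^esub>}"
  unfolding cf_def using basis_mod.supp_fin[OF basisF] by blast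

lemma cf_repr: "y \<in> carrier (F b) \<Longrightarrow> finite U \<Longrightarrow> U \<subseteq> {i\<in>B. fst i \<le> b} \<Longrightarrow> {i. cf b y i \<noteq> \<zero>\<^bsub>R\<^esub>} \<subseteq> U \<Longrightarrow>
   y = lc (F b) (vF S b) (cf b y) U"
  unfolding cf_def using basis_mod.coef_repr[OF basisF] by blast

lemma cf_unique:
  assumes "finite U" "U \<subseteq> {i\<in>B. fst i \<le> b}" "c \<in> U \<rightarrow> carrier R" "y = lc (F b) (vF S b) c U"
  shows "cf b y i = (if i \<in> U then c i else \<zero>\<^bsub>R\<^esub>)"
  unfolding cf_def using basis_mod.coef_unique[OF basisF assms] by auto

lemma cf_zero: "cf b \<zero>\<^bsub>F b\<^esub> i = \<zero>\<^bsub>R\<^esub>"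
  unfolding cf_def using basis_mod.coef_zero[OF basisF] by blast

lemma cf_add: "x \<in> carrier (F b) \<Longrightarrow> y \<in> carrier (F b) \<Longrightarrow> cf b (x \<oplus>\<^bsub>F b\<^esub> y) i = cf b x i \<oplus>\<^bsub>R\<^esub> cf b y i"
  unfolding cf_def using basis_mod.coef_add[OF basisF] by blast

lemma cf_smult: "r \<in> carrier R \<Longrightarrow> x \<in> carrier (F b) \<Longrightarrow> cf b (r \<odot>\<^bsub>F b\<^esub> x) i = r \<otimes>\<^bsub>R\<^esub> cf b x i"
  unfolding cf_def using basis_mod.coef_smult[OF basisF] by blast

lemma cf_lc: "finite K \<Longrightarrow> a \<in> K \<rightarrow> carrier R \<Longrightarrow> w \<in> K \<rightarrow> carrier (F b) \<Longrightarrow>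
   cf b (lc (F b) w a K) i = finsum R (\<lambda>k. a k \<otimes>\<^bsub>R\<^esub> cf b (w k) i) K"
  unfolding cf_def using basis_mod.coef_lc[OF basisF] by blast

lemma cf_nat:
  assumes db: "d \<le> b" and y: "y \<in> carrier (F d)"
  shows "cf b (S d b y) i = cf d y i"
proof -
  interpret Fd: module R "F d" by (rule modF)
  interpret Fb: module R "F b" by (rule modF)
  define U where "U = {i. cf d y i \<noteq> \<zero>\<^bsub>R\<^esub>}"
  have U: "finite U" "U \<subseteq> {i\<in>B. fst i \<le> d}" using cf_fin[OF y] cf_supp[OF y] U_def by auto
  have Ub: "U \<subseteq> {i\<in>B. fst i \<le> b}" using U(2) db order_trans by blast
  have cU: "cf d y \<in> U \<rightarrow> carrier R" using cf_carr[OF y] by auto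
  have vU: "vF S d \<in> U \<rightarrow> carrier (F d)" using U(2) by (rule vF_Pi)
  have yr: "y = lc (F d) (vF S d) (cf d y) U" by (rule cf_repr[OF y U]) (auto simp: U_def)
  have "S d b y = S d b (lc (F d) (vF S d) (cf d y) U)" using yr by (rule arg_cong)
  also have "\<dots> = lc (F b) (\<lambda>i. S d b (vF S d i)) (cf d y) U"
    by (rule lin_map_lc[OF modF modF linS[OF db] U(1) cU vU])
  also have "\<dots> = lc (F b) (vF S b) (cf d y) U"
  proof (rule Fb.lc_cong)
    show "vF S b \<in> U \<rightarrow> carrier (F b)" using Ub by (rule vF_Pi)
    show "\<And>i. i \<in> U \<Longrightarrow> S d b (vF S d i) = vF S b i"
      using U(2) B_carr S_comp db unfolding vF_def by auto
  qed (use cU in auto)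
  finally have e: "S d b y = lc (F b) (vF S b) (cf d y) U" .
  show ?thesis using cf_unique[OF U(1) Ub cU e, of i] U_def by auto
qed

end


locale proj = gfree R F S B
  for R :: "('r, 'c) ring_scheme"
    and F :: "'p::lattice_ab_group_add \<Rightarrow> ('r, 'f) module"
    and S :: "'p \<Rightarrow> 'p \<Rightarrow> 'f \<Rightarrow> 'f"
    and B :: "('p \<times> 'f) set" +
  fixes M :: "'p \<Rightarrow> ('r, 'm) module" and T :: "'p \<Rightarrow> 'p \<Rightarrow> 'm \<Rightarrow> 'm"
    and \<iota> :: "'p \<Rightarrow> 'm \<Rightarrow> 'f" and \<pi> :: "'p \<Rightarrow> 'f \<Rightarrow> 'm"
  assumes PID: "principal_domain R"
    and pmM: "persistence_module R M T"
    and fg: "\<And>a. fin_gen R (M a)"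
    and hi: "pmod_hom R M T F S \<iota>"
    and hp: "pmod_hom R F S M T \<pi>"
    and retr: "\<And>a x. x \<in> carrier (M a) \<Longrightarrow> \<pi> a (\<iota> a x) = x"
begin

lemma modM: "module R (M a)" using pmM unfolding persistence_module_def by auto
lemma linT: "a \<le> b \<Longrightarrow> lin_map R (M a) (M b) (T a b)" using pmM unfolding persistence_module_def by auto
lemma T_carr: assumes "a \<le> b" "y \<in> carrier (M a)" shows "T a b y \<in> carrier (M b)"
  using linT[OF assms(1)] assms(2) unfolding lin_map_def by blast
lemma T_comp: "a \<le> b \<Longrightarrow> b \<le> c \<Longrightarrow> y \<in> carrier (M a) \<Longrightarrow> T b c (T a b y) = T a c y"
  using pmM unfolding persistence_module_def by auto
lemma T_id: "y \<in> carrier (M a) \<Longrightarrow> T a a y = y"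
  using pmM unfolding persistence_module_def by auto
lemma S_id: "y \<in> carrier (F a) \<Longrightarrow> S a a y = y"
  using pmF unfolding persistence_module_def by auto

lemma lin_i: "lin_map R (M a) (F a) (\<iota> a)" using hi unfolding pmod_hom_def by auto
lemma lin_p: "lin_map R (F a) (M a) (\<pi> a)" using hp unfolding pmod_hom_def by auto
lemma i_carr: "x \<in> carrier (M a) \<Longrightarrow> \<iota> a x \<in> carrier (F a)"
  using lin_i unfolding lin_map_def by blast
lemma p_carr: "x \<in> carrier (F a) \<Longrightarrow> \<pi> a x \<in> carrier (M a)"
  using lin_p unfolding lin_map_def by blast
lemma i_nat: "d \<le> b \<Longrightarrow> x \<in> carrier (M d) \<Longrightarrow> \<iota> b (T d b x) = S d b (\<iota> d x)"
  using hi unfolding pmod_hom_def by auto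
lemma p_nat: "d \<le> b \<Longrightarrow> x \<in> carrier (F d) \<Longrightarrow> \<pi> b (S d b x) = T d b (\<pi> d x)"
  using hp unfolding pmod_hom_def by auto
lemma i_zero: "\<iota> a \<zero>\<^bsub>M a\<^esub> = \<zero>\<^bsub>F a\<^esub>" by (rule lin_map_zero[OF modM modF lin_i])
lemma p_zero: "\<pi> a \<zero>\<^bsub>F a\<^esub> = \<zero>\<^bsub>M a\<^esub>" by (rule lin_map_zero[OF modF modM lin_p])
lemma i_add: "x \<in> carrier (M a) \<Longrightarrow> y \<in> carrier (M a) \<Longrightarrow> \<iota> a (x \<oplus>\<^bsub>M a\<^esub> y) = \<iota> a x \<oplus>\<^bsub>F a\<^esub> \<iota> a y"
  using lin_i unfolding lin_map_def by blast
lemma i_smult: "r \<in> carrier R \<Longrightarrow> x \<in> carrier (M a) \<Longrightarrow> \<iota> a (r \<odot>\<^bsub>M a\<^esub> x) = r \<odot>\<^bsub>F a\<^esub> \<iota> a x"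
  using lin_i unfolding lin_map_def by blast

lemma cring_R: "cring R" using modF[of undefined] unfolding module_def by blast

definition cfi :: "'p \<Rightarrow> 'm \<Rightarrow> 'p \<times> 'f \<Rightarrow> 'r" where
  "cfi a z = cf a (\<iota> a z)"

lemma cfi_carr: "z \<in> carrier (M a) \<Longrightarrow> cfi a z i \<in> carrier R"
  unfolding cfi_def by (rule cf_carr[OF i_carr])

lemma cfi_supp: "z \<in> carrier (M a) \<Longrightarrow> cfi a z i \<noteq> \<zero>\<^bsub>R\<^esub> \<Longrightarrow> i \<in> B \<and> fst i \<le> a"
  unfolding cfi_def by (rule cf_supp[OF i_carr])

lemma cfi_fin: "z \<in> carrier (M a) \<Longrightarrow> finite {i. cfi a z i \<noteq> \<zero>\<^bsub>R\<^esub>}"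
  unfolding cfi_def by (rule cf_fin[OF i_carr])

lemma cfi_nat: "d \<le> b \<Longrightarrow> z \<in> carrier (M d) \<Longrightarrow> cfi b (T d b z) i = cfi d z i"
  unfolding cfi_def using i_nat cf_nat i_carr by auto

definition Gs :: "'p \<Rightarrow> 'm set" where
  "Gs a = (SOME G. finite G \<and> G \<subseteq> carrier (M a) \<and>
        (\<forall>y\<in>carrier (M a). \<exists>c. c \<in> G \<rightarrow> carrier R \<and> y = finsum (M a) (\<lambda>x. c x \<odot>\<^bsub>M a\<^esub> x) G))"

lemma Gs_props: "finite (Gs a)" "Gs a \<subseteq> carrier (M a)"
  "\<And>y. y \<in> carrier (M a) \<Longrightarrow> \<exists>c. c \<in> Gs a \<rightarrow> carrier R \<and> y = lc (M a) (\<lambda>x. x) c (Gs a)"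
proof -
  have ex: "\<exists>G. finite G \<and> G \<subseteq> carrier (M a) \<and>
        (\<forall>y\<in>carrier (M a). \<exists>c. c \<in> G \<rightarrow> carrier R \<and> y = finsum (M a) (\<lambda>x. c x \<odot>\<^bsub>M a\<^esub> x) G)"
    using fg[of a] unfolding fin_gen_def by blast
  note P = someI_ex[OF ex, folded Gs_def]
  show "finite (Gs a)" "Gs a \<subseteq> carrier (M a)" using P by blast+
  show "\<And>y. y \<in> carrier (M a) \<Longrightarrow> \<exists>c. c \<in> Gs a \<rightarrow> carrier R \<and> y = lc (M a) (\<lambda>x. x) c (Gs a)"
    using P unfolding lc_def by blast
qed

definition Sb :: "'p \<Rightarrow> ('p \<times> 'f) set" where
  "Sb a = (\<Union>g\<in>Gs a. {i. cfi a g i \<noteq> \<zero>\<^bsub>R\<^esub>})"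

lemma Sb_fin: "finite (Sb a)"
  unfolding Sb_def using Gs_props(1,2) cfi_fin by blast

lemma Sb_sub: "i \<in> Sb a \<Longrightarrow> i \<in> B \<and> fst i \<le> a"
  unfolding Sb_def using Gs_props(2) cfi_supp by blast

lemma supp_M:
  assumes z: "z \<in> carrier (M b)" and nz: "cfi b z i \<noteq> \<zero>\<^bsub>R\<^esub>"
  shows "i \<in> Sb b"
proof (rule ccontr)
  assume ni: "i \<notin> Sb b"
  interpret Mb: module R "M b" by (rule modM)
  obtain c where c: "c \<in> Gs b \<rightarrow> carrier R" "z = lc (M b) (\<lambda>x. x) c (Gs b)"
    using Gs_props(3)[OF z] by blast
  have gc: "(\<lambda>x. x) \<in> Gs b \<rightarrow> carrier (M b)" using Gs_props(2) by auto
  have "\<iota> b z = lc (F b) (\<lambda>x. \<iota> b x) c (Gs b)"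
    unfolding c(2) by (rule lin_map_lc[OF modM modF lin_i Gs_props(1) c(1) gc])
  then have "cfi b z i = finsum R (\<lambda>g. c g \<otimes>\<^bsub>R\<^esub> cf b (\<iota> b g) i) (Gs b)"
    unfolding cfi_def using cf_lc[OF Gs_props(1) c(1)] i_carr Gs_props(2) by (auto simp: Pi_iff subset_iff)
  also have "\<dots> = finsum R (\<lambda>g. \<zero>\<^bsub>R\<^esub>) (Gs b)"
  proof (rule Mb.R.finsum_cong')
    show "\<And>g. g \<in> Gs b \<Longrightarrow> c g \<otimes>\<^bsub>R\<^esub> cf b (\<iota> b g) i = \<zero>\<^bsub>R\<^esub>"
    proof -
      fix g assume g: "g \<in> Gs b"
      then have "cf b (\<iota> b g) i = \<zero>\<^bsub>R\<^esub>" using ni unfolding Sb_def cfi_def by blast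
      moreover have "c g \<in> carrier R" using c(1) g by blast
      ultimately show "c g \<otimes>\<^bsub>R\<^esub> cf b (\<iota> b g) i = \<zero>\<^bsub>R\<^esub>" by simp
    qed
  qed auto
  also have "\<dots> = \<zero>\<^bsub>R\<^esub>" by simp
  finally show False using nz by blast
qed

lemma supp_below:
  assumes "d \<le> b" "z \<in> carrier (M d)" "cfi d z i \<noteq> \<zero>\<^bsub>R\<^esub>"
  shows "i \<in> Sb b"
proof -
  have "cfi b (T d b z) i \<noteq> \<zero>\<^bsub>R\<^esub>" using cfi_nat assms by simp
  then show ?thesis using supp_M T_carr assms by blast
qed

definition phi :: "'p \<Rightarrow> 'm \<Rightarrow> 'p \<times> 'f \<Rightarrow> 'r" where
  "phi a z i = (if fst i = a then cfi a z i else \<zero>\<^bsub>R\<^esub>)"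

definition Gen :: "'p \<Rightarrow> 'm set" where
  "Gen a = (SOME G. finite G \<and> G \<subseteq> carrier (M a) \<and>
      (\<forall>x\<in>carrier (M a). \<exists>c\<in>G \<rightarrow> carrier R. \<forall>i. phi a x i = finsum R (\<lambda>g. c g \<otimes>\<^bsub>R\<^esub> phi a g i) G) \<and>
      (\<forall>c\<in>G \<rightarrow> carrier R. (\<forall>i. finsum R (\<lambda>g. c g \<otimes>\<^bsub>R\<^esub> phi a g i) G = \<zero>\<^bsub>R\<^esub>) \<longrightarrow> (\<forall>g\<in>G. c g = \<zero>\<^bsub>R\<^esub>)))"

lemma Gen_ex: "\<exists>G. finite G \<and> G \<subseteq> carrier (M a) \<and>
      (\<forall>x\<in>carrier (M a). \<exists>c\<in>G \<rightarrow> carrier R. \<forall>i. phi a x i = finsum R (\<lambda>g. c g \<otimes>\<^bsub>R\<^esub> phi a g i) G) \<and>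
      (\<forall>c\<in>G \<rightarrow> carrier R. (\<forall>i. finsum R (\<lambda>g. c g \<otimes>\<^bsub>R\<^esub> phi a g i) G = \<zero>\<^bsub>R\<^esub>) \<longrightarrow> (\<forall>g\<in>G. c g = \<zero>\<^bsub>R\<^esub>))"
proof -
  interpret Ma: module R "M a" by (rule modM)
  interpret Fa: module R "F a" by (rule modF)
  have fI: "finite {i \<in> Sb a. fst i = a}" using Sb_fin by auto
  show ?thesis
  proof (rule principal_domain.pid_basis[OF PID fI])
    show "\<forall>x\<in>carrier (M a). \<forall>i. phi a x i \<in> carrier R"
      unfolding phi_def using cfi_carr by auto
    show "\<forall>x\<in>carrier (M a). \<forall>i. i \<notin> {i \<in> Sb a. fst i = a} \<longrightarrow> phi a x i = \<zero>\<^bsub>R\<^esub>"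
      unfolding phi_def using supp_M by auto
    show "\<exists>z\<in>carrier (M a). \<forall>i. phi a z i = \<zero>\<^bsub>R\<^esub>"
    proof (intro bexI[of _ "\<zero>\<^bsub>M a\<^esub>"] allI)
      fix i show "phi a \<zero>\<^bsub>M a\<^esub> i = \<zero>\<^bsub>R\<^esub>"
        unfolding phi_def cfi_def i_zero cf_zero by simp
    qed simp
    show "\<forall>x\<in>carrier (M a). \<forall>y\<in>carrier (M a). \<exists>z\<in>carrier (M a). \<forall>i. phi a z i = phi a x i \<oplus>\<^bsub>R\<^esub> phi a y i"
    proof (intro ballI)
      fix x y assume x: "x \<in> carrier (M a)" and y: "y \<in> carrier (M a)"
      show "\<exists>z\<in>carrier (M a). \<forall>i. phi a z i = phi a x i \<oplus>\<^bsub>R\<^esub> phi a y i"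
      proof (intro bexI[of _ "x \<oplus>\<^bsub>M a\<^esub> y"] allI)
        fix i show "phi a (x \<oplus>\<^bsub>M a\<^esub> y) i = phi a x i \<oplus>\<^bsub>R\<^esub> phi a y i"
          unfolding phi_def cfi_def using x y by (simp add: i_add cf_add i_carr)
      qed (use x y in simp)
    qed
    show "\<forall>r\<in>carrier R. \<forall>x\<in>carrier (M a). \<exists>z\<in>carrier (M a). \<forall>i. phi a z i = r \<otimes>\<^bsub>R\<^esub> phi a x i"
    proof (intro ballI)
      fix r x assume r: "r \<in> carrier R" and x: "x \<in> carrier (M a)"
      show "\<exists>z\<in>carrier (M a). \<forall>i. phi a z i = r \<otimes>\<^bsub>R\<^esub> phi a x i"
      proof (intro bexI[of _ "r \<odot>\<^bsub>M a\<^esub> x"] allI)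
        fix i show "phi a (r \<odot>\<^bsub>M a\<^esub> x) i = r \<otimes>\<^bsub>R\<^esub> phi a x i"
          unfolding phi_def cfi_def using r x by (simp add: i_smult cf_smult i_carr)
      qed (use r x in simp)
    qed
  qed
qed

lemma Gen_props: "finite (Gen a)" "Gen a \<subseteq> carrier (M a)"
  "\<And>x. x \<in> carrier (M a) \<Longrightarrow> \<exists>c\<in>Gen a \<rightarrow> carrier R. \<forall>i. phi a x i = finsum R (\<lambda>g. c g \<otimes>\<^bsub>R\<^esub> phi a g i) (Gen a)"
  "\<And>c. c \<in> Gen a \<rightarrow> carrier R \<Longrightarrow> (\<forall>i. finsum R (\<lambda>g. c g \<otimes>\<^bsub>R\<^esub> phi a g i) (Gen a) = \<zero>\<^bsub>R\<^esub>) \<Longrightarrow> \<forall>g\<in>Gen a. c g = \<zero>\<^bsub>R\<^esub>"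
  using someI_ex[OF Gen_ex[of a], folded Gen_def] by blast+

end


context proj
begin

definition vM :: "'p \<Rightarrow> 'p \<times> 'm \<Rightarrow> 'm" where
  "vM d k = T (fst k) d (snd k)"

definition BM :: "('p \<times> 'm) set" where
  "BM = {(a, g). g \<in> Gen a}"

definition inN :: "'p \<Rightarrow> 'm \<Rightarrow> bool" where
  "inN d y \<longleftrightarrow> (\<exists>K c. finite K \<and> K \<subseteq> {k\<in>BM. fst k \<le> d} \<and> c \<in> K \<rightarrow> carrier R \<and> y = lc (M d) (vM d) c K)"

lemma BM_carr: "k \<in> BM \<Longrightarrow> snd k \<in> carrier (M (fst k))"
  using Gen_props(2)[of "fst k"] unfolding BM_def by (cases k) auto

lemma vM_carr: "k \<in> BM \<Longrightarrow> fst k \<le> d \<Longrightarrow> vM d k \<in> carrier (M d)"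
  unfolding vM_def using BM_carr T_carr by blast

lemma vM_Pi: "K \<subseteq> {k\<in>BM. fst k \<le> d} \<Longrightarrow> vM d \<in> K \<rightarrow> carrier (M d)"
  using vM_carr by blast

lemma N_carr: "inN d y \<Longrightarrow> y \<in> carrier (M d)"
proof -
  interpret Md: module R "M d" by (rule modM)
  assume "inN d y"
  then obtain K c where K: "finite K" "K \<subseteq> {k\<in>BM. fst k \<le> d}" "c \<in> K \<rightarrow> carrier R" "y = lc (M d) (vM d) c K"
    unfolding inN_def by blast
  show ?thesis using K(4) Md.lc_closed[OF K(3) vM_Pi[OF K(2)]] by simp
qed

lemma N0: "inN d \<zero>\<^bsub>M d\<^esub>"
proof -
  interpret Md: module R "M d" by (rule modM)
  show ?thesis unfolding inN_def by (rule exI[of _ "{}"]) auto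
qed

lemma N_add:
  assumes x: "inN d x" and y: "inN d y"
  shows "inN d (x \<oplus>\<^bsub>M d\<^esub> y)"
proof -
  interpret Md: module R "M d" by (rule modM)
  obtain K1 c1 where K1: "finite K1" "K1 \<subseteq> {k\<in>BM. fst k \<le> d}" "c1 \<in> K1 \<rightarrow> carrier R" "x = lc (M d) (vM d) c1 K1"
    using x unfolding inN_def by blast
  obtain K2 c2 where K2: "finite K2" "K2 \<subseteq> {k\<in>BM. fst k \<le> d}" "c2 \<in> K2 \<rightarrow> carrier R" "y = lc (M d) (vM d) c2 K2"
    using y unfolding inN_def by blast
  define U where "U = K1 \<union> K2"
  define e1 where "e1 = (\<lambda>k. if k \<in> K1 then c1 k else \<zero>\<^bsub>R\<^esub>)"
  define e2 where "e2 = (\<lambda>k. if k \<in> K2 then c2 k else \<zero>\<^bsub>R\<^esub>)"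
  have U: "finite U" "U \<subseteq> {k\<in>BM. fst k \<le> d}" using K1 K2 U_def by auto
  have vU: "vM d \<in> U \<rightarrow> carrier (M d)" by (rule vM_Pi[OF U(2)])
  have e1c: "e1 \<in> U \<rightarrow> carrier R" using K1(3) unfolding e1_def by auto
  have e2c: "e2 \<in> U \<rightarrow> carrier R" using K2(3) unfolding e2_def by auto
  have "lc (M d) (vM d) e1 U = lc (M d) (vM d) e1 K1"
    by (rule Md.lc_zero_ext) (use U e1c vU in \<open>auto simp: U_def e1_def\<close>)
  also have "\<dots> = lc (M d) (vM d) c1 K1"
    by (rule Md.lc_cong) (use K1 vM_Pi in \<open>auto simp: e1_def\<close>)
  finally have 1: "lc (M d) (vM d) e1 U = x" using K1(4) by simp
  have "lc (M d) (vM d) e2 U = lc (M d) (vM d) e2 K2"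
    by (rule Md.lc_zero_ext) (use U e2c vU in \<open>auto simp: U_def e2_def\<close>)
  also have "\<dots> = lc (M d) (vM d) c2 K2"
    by (rule Md.lc_cong) (use K2 vM_Pi in \<open>auto simp: e2_def\<close>)
  finally have 2: "lc (M d) (vM d) e2 U = y" using K2(4) by simp
  have "x \<oplus>\<^bsub>M d\<^esub> y = lc (M d) (vM d) (\<lambda>k. e1 k \<oplus>\<^bsub>R\<^esub> e2 k) U"
    using Md.lc_add[OF e1c e2c vU] 1 2 by simp
  moreover have "(\<lambda>k. e1 k \<oplus>\<^bsub>R\<^esub> e2 k) \<in> U \<rightarrow> carrier R" using e1c e2c by auto
  ultimately show ?thesis unfolding inN_def using U by blast
qed

lemma N_smult:
  assumes r: "r \<in> carrier R" and x: "inN d x"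
  shows "inN d (r \<odot>\<^bsub>M d\<^esub> x)"
proof -
  interpret Md: module R "M d" by (rule modM)
  obtain K c where K: "finite K" "K \<subseteq> {k\<in>BM. fst k \<le> d}" "c \<in> K \<rightarrow> carrier R" "x = lc (M d) (vM d) c K"
    using x unfolding inN_def by blast
  have "r \<odot>\<^bsub>M d\<^esub> x = lc (M d) (vM d) (\<lambda>k. r \<otimes>\<^bsub>R\<^esub> c k) K"
    using Md.lc_smult[OF r K(3) vM_Pi[OF K(2)] K(1)] K(4) by simp
  moreover have "(\<lambda>k. r \<otimes>\<^bsub>R\<^esub> c k) \<in> K \<rightarrow> carrier R" using K(3) r by auto
  ultimately show ?thesis unfolding inN_def using K by blast
qed

lemma N_T:
  assumes dd: "d \<le> d'" and x: "inN d x"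
  shows "inN d' (T d d' x)"
proof -
  interpret Md: module R "M d'" by (rule modM)
  obtain K c where K: "finite K" "K \<subseteq> {k\<in>BM. fst k \<le> d}" "c \<in> K \<rightarrow> carrier R" "x = lc (M d) (vM d) c K"
    using x unfolding inN_def by blast
  have K': "K \<subseteq> {k\<in>BM. fst k \<le> d'}" using K(2) dd order_trans by blast
  have "T d d' x = lc (M d') (\<lambda>k. T d d' (vM d k)) c K"
    unfolding K(4) by (rule lin_map_lc[OF modM modM linT[OF dd] K(1) K(3) vM_Pi[OF K(2)]])
  also have "\<dots> = lc (M d') (vM d') c K"
  proof (rule Md.lc_cong)
    show "vM d' \<in> K \<rightarrow> carrier (M d')" by (rule vM_Pi[OF K'])
    show "\<And>i. i \<in> K \<Longrightarrow> T d d' (vM d i) = vM d' i"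
    proof -
      fix i assume i: "i \<in> K"
      then have "snd i \<in> carrier (M (fst i))" "fst i \<le> d" using K(2) BM_carr by auto
      then show "T d d' (vM d i) = vM d' i" unfolding vM_def using T_comp dd by auto
    qed
  qed (use K in auto)
  finally show ?thesis unfolding inN_def using K(1,3) K' by blast
qed

lemma N_gen:
  assumes g: "g \<in> Gen d"
  shows "inN d g"
proof -
  interpret Md: module R "M d" by (rule modM)
  have gc: "g \<in> carrier (M d)" using g Gen_props(2) by auto
  have sub: "{(d, g)} \<subseteq> {k\<in>BM. fst k \<le> d}" using g unfolding BM_def by auto
  have "lc (M d) (vM d) (\<lambda>_. \<one>\<^bsub>R\<^esub>) {(d, g)} = \<one>\<^bsub>R\<^esub> \<odot>\<^bsub>M d\<^esub> vM d (d, g) \<oplus>\<^bsub>M d\<^esub> lc (M d) (vM d) (\<lambda>_. \<one>\<^bsub>R\<^esub>) {}"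
    by (rule Md.lc_insert) (use vM_Pi[OF sub] in auto)
  also have "\<dots> = g" unfolding vM_def using gc T_id by simp
  finally show ?thesis unfolding inN_def using sub by (intro exI[of _ "{(d, g)}"] exI[of _ "\<lambda>_. \<one>\<^bsub>R\<^esub>"]) auto
qed

lemma N_lc:
  assumes "finite K" "a \<in> K \<rightarrow> carrier R" "\<And>k. k \<in> K \<Longrightarrow> inN d (w k)"
  shows "inN d (lc (M d) w a K)"
  using assms
proof (induction K rule: finite_induct)
  case empty
  interpret Md: module R "M d" by (rule modM)
  show ?case using N0 by simp
next
  case (insert x K)
  interpret Md: module R "M d" by (rule modM)
  have wc: "w \<in> insert x K \<rightarrow> carrier (M d)" using insert.prems(2) N_carr by blast
  have "lc (M d) w a (insert x K) = a x \<odot>\<^bsub>M d\<^esub> w x \<oplus>\<^bsub>M d\<^esub> lc (M d) w a K"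
    by (rule Md.lc_insert[OF insert.hyps(1,2) insert.prems(1) wc])
  moreover have "inN d (a x \<odot>\<^bsub>M d\<^esub> w x)" using insert.prems by (intro N_smult) auto
  moreover have "inN d (lc (M d) w a K)" using insert by auto
  ultimately show ?case using N_add by simp
qed

end


lemma card_lt:
  fixes A D :: "'p::lattice set"
  assumes "finite D" "finite A" "A \<noteq> {}" "A \<subseteq> D" "\<mu> < Sup_fin A"
  shows "card {s\<in>D. s \<le> \<mu>} < card {s\<in>D. s \<le> Sup_fin A}"
proof (rule psubset_card_mono)
  show "finite {s\<in>D. s \<le> Sup_fin A}" using assms(1) by auto
  have sub: "{s\<in>D. s \<le> \<mu>} \<subseteq> {s\<in>D. s \<le> Sup_fin A}" using assms(5) by auto
  have "\<exists>s\<in>A. \<not> s \<le> \<mu>"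
  proof (rule ccontr)
    assume "\<not> (\<exists>s\<in>A. \<not> s \<le> \<mu>)"
    then have "Sup_fin A \<le> \<mu>" using Sup_fin.boundedI[OF assms(2,3)] by blast
    then show False using assms(5) by simp
  qed
  then obtain s where s: "s \<in> A" "\<not> s \<le> \<mu>" by blast
  have "s \<le> Sup_fin A" using Sup_fin.coboundedI[OF assms(2) s(1)] .
  then have "s \<in> {s\<in>D. s \<le> Sup_fin A}" "s \<notin> {s\<in>D. s \<le> \<mu>}" using s assms(4) by auto
  then show "{s\<in>D. s \<le> \<mu>} \<subset> {s\<in>D. s \<le> Sup_fin A}" using sub by blast
qed

context proj
begin

lemma zero_supp:
  assumes z: "z \<in> carrier (M d)" and zs: "\<forall>i. cfi d z i = \<zero>\<^bsub>R\<^esub>"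
  shows "z = \<zero>\<^bsub>M d\<^esub>"
proof -
  interpret Fd: module R "F d" by (rule modF)
  have "\<iota> d z = lc (F d) (vF S d) (cf d (\<iota> d z)) {}"
    by (rule cf_repr[OF i_carr[OF z]]) (use zs in \<open>auto simp: cfi_def\<close>)
  then have "\<iota> d z = \<zero>\<^bsub>F d\<^esub>" by simp
  then have "\<pi> d (\<iota> d z) = \<zero>\<^bsub>M d\<^esub>" using p_zero by simp
  then show ?thesis using retr[OF z] by simp
qed

lemma reduce:
  assumes z: "z \<in> carrier (M d)" and ne: "{i. cfi d z i \<noteq> \<zero>\<^bsub>R\<^esub>} \<noteq> {}"
  shows "Sup_fin (fst ` {i. cfi d z i \<noteq> \<zero>\<^bsub>R\<^esub>}) \<le> d"
    and "\<exists>z'\<in>carrier (M (Sup_fin (fst ` {i. cfi d z i \<noteq> \<zero>\<^bsub>R\<^esub>}))).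
           z = T (Sup_fin (fst ` {i. cfi d z i \<noteq> \<zero>\<^bsub>R\<^esub>})) d z'"
proof -
  define A where "A = {i. cfi d z i \<noteq> \<zero>\<^bsub>R\<^esub>}"
  define m where "m = Sup_fin (fst ` A)"
  have Af: "finite A" using cfi_fin[OF z] A_def by simp
  have Ane: "fst ` A \<noteq> {}" using ne A_def by simp
  have AB: "\<And>i. i \<in> A \<Longrightarrow> i \<in> B \<and> fst i \<le> d" using cfi_supp[OF z] A_def by blast
  show md: "Sup_fin (fst ` {i. cfi d z i \<noteq> \<zero>\<^bsub>R\<^esub>}) \<le> d"
    unfolding A_def[symmetric] using Sup_fin.boundedI[OF finite_imageI[OF Af] Ane] AB by blast
  have Am: "A \<subseteq> {i\<in>B. fst i \<le> m}"
    unfolding m_def using AB Sup_fin.coboundedI[OF finite_imageI[OF Af]] by blast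
  have Ad: "A \<subseteq> {i\<in>B. fst i \<le> d}" using AB by blast
  have md': "m \<le> d" using md unfolding m_def A_def .
  interpret Fm: module R "F m" by (rule modF)
  interpret Fd: module R "F d" by (rule modF)
  have cA: "cfi d z \<in> A \<rightarrow> carrier R" using cfi_carr[OF z] by blast
  define f where "f = lc (F m) (vF S m) (cfi d z) A"
  have fc: "f \<in> carrier (F m)" unfolding f_def using Fm.lc_closed[OF cA vF_Pi[OF Am]] .
  have "S m d f = lc (F d) (\<lambda>i. S m d (vF S m i)) (cfi d z) A"
    unfolding f_def by (rule lin_map_lc[OF modF modF linS[OF md'] Af cA vF_Pi[OF Am]])
  also have "\<dots> = lc (F d) (vF S d) (cfi d z) A"
  proof (rule Fd.lc_cong)
    show "vF S d \<in> A \<rightarrow> carrier (F d)" by (rule vF_Pi[OF Ad])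
    show "\<And>i. i \<in> A \<Longrightarrow> S m d (vF S m i) = vF S d i"
      unfolding vF_def using Am B_carr S_comp md' by auto
  qed (use cA in auto)
  also have "\<dots> = \<iota> d z"
    unfolding cfi_def by (rule cf_repr[OF i_carr[OF z] Af Ad, symmetric]) (auto simp: A_def cfi_def)
  finally have e: "S m d f = \<iota> d z" .
  have "z = \<pi> d (\<iota> d z)" using retr[OF z] by simp
  also have "\<dots> = \<pi> d (S m d f)" using e by simp
  also have "\<dots> = T m d (\<pi> m f)" by (rule p_nat[OF md' fc])
  finally have "z = T m d (\<pi> m f)" .
  then show "\<exists>z'\<in>carrier (M (Sup_fin (fst ` {i. cfi d z i \<noteq> \<zero>\<^bsub>R\<^esub>}))).
           z = T (Sup_fin (fst ` {i. cfi d z i \<noteq> \<zero>\<^bsub>R\<^esub>})) d z'"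
    unfolding A_def[symmetric] m_def[symmetric] using p_carr[OF fc] by blast
qed

lemma decomp:
  assumes z': "z' \<in> carrier (M m)"
  shows "\<exists>c K r. c \<in> Gen m \<rightarrow> carrier R \<and> finite K \<and> K \<subseteq> B \<and> (\<forall>i\<in>K. fst i < m) \<and> r \<in> K \<rightarrow> carrier R \<and>
     z' = lc (M m) (\<lambda>x. x) c (Gen m) \<oplus>\<^bsub>M m\<^esub> lc (M m) (\<lambda>i. T (fst i) m (\<pi> (fst i) (snd i))) r K"
proof -
  interpret Mm: module R "M m" by (rule modM)
  interpret Fm: module R "F m" by (rule modF)
  obtain c where c: "c \<in> Gen m \<rightarrow> carrier R" "\<forall>i. phi m z' i = finsum R (\<lambda>g. c g \<otimes>\<^bsub>R\<^esub> phi m g i) (Gen m)"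
    using Gen_props(3)[OF z'] by blast
  have idG: "(\<lambda>x. x) \<in> Gen m \<rightarrow> carrier (M m)" using Gen_props(2) by auto
  define g where "g = lc (M m) (\<lambda>x. x) c (Gen m)"
  have gc: "g \<in> carrier (M m)" unfolding g_def by (rule Mm.lc_closed[OF c(1) idG])
  define \<rho> where "\<rho> = z' \<oplus>\<^bsub>M m\<^esub> ((\<ominus>\<^bsub>R\<^esub> \<one>\<^bsub>R\<^esub>) \<odot>\<^bsub>M m\<^esub> g)"
  have m1: "\<ominus>\<^bsub>R\<^esub> \<one>\<^bsub>R\<^esub> \<in> carrier R" by simp
  have mg: "(\<ominus>\<^bsub>R\<^esub> \<one>\<^bsub>R\<^esub>) \<odot>\<^bsub>M m\<^esub> g \<in> carrier (M m)" using m1 gc by simp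
  have \<rho>c: "\<rho> \<in> carrier (M m)" unfolding \<rho>_def using z' mg by simp
  have ig: "\<iota> m g = lc (F m) (\<lambda>x. \<iota> m x) c (Gen m)"
    unfolding g_def by (rule lin_map_lc[OF modM modF lin_i Gen_props(1) c(1) idG])
  have cfg: "\<And>i. cfi m g i = finsum R (\<lambda>x. c x \<otimes>\<^bsub>R\<^esub> cfi m x i) (Gen m)"
    unfolding cfi_def ig
    by (rule cf_lc[OF Gen_props(1) c(1)]) (use Gen_props(2) i_carr in blast)
  have cfr: "\<And>i. cfi m \<rho> i = cfi m z' i \<oplus>\<^bsub>R\<^esub> (\<ominus>\<^bsub>R\<^esub> \<one>\<^bsub>R\<^esub>) \<otimes>\<^bsub>R\<^esub> cfi m g i"
    unfolding cfi_def \<rho>_def using z' gc m1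
    by (simp add: i_add i_smult cf_add cf_smult i_carr)
  have top0: "\<And>i. fst i = m \<Longrightarrow> cfi m \<rho> i = \<zero>\<^bsub>R\<^esub>"
  proof -
    fix i :: "'p \<times> 'f" assume fi: "fst i = m"
    have "cfi m z' i = phi m z' i" unfolding phi_def using fi by simp
    also have "\<dots> = finsum R (\<lambda>g. c g \<otimes>\<^bsub>R\<^esub> phi m g i) (Gen m)" using c(2) by blast
    also have "\<dots> = finsum R (\<lambda>x. c x \<otimes>\<^bsub>R\<^esub> cfi m x i) (Gen m)"
    proof (rule Mm.R.finsum_cong')
      show "(\<lambda>x. c x \<otimes>\<^bsub>R\<^esub> cfi m x i) \<in> Gen m \<rightarrow> carrier R"
      proof
        fix x assume x: "x \<in> Gen m"
        then have "c x \<in> carrier R" "x \<in> carrier (M m)" using c(1) Gen_props(2) by auto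
        then show "c x \<otimes>\<^bsub>R\<^esub> cfi m x i \<in> carrier R" using cfi_carr by simp
      qed
    qed (use fi in \<open>auto simp: phi_def\<close>)
    also have "\<dots> = cfi m g i" using cfg by simp
    finally have e: "cfi m z' i = cfi m g i" .
    have gci: "cfi m g i \<in> carrier R" by (rule cfi_carr[OF gc])
    show "cfi m \<rho> i = \<zero>\<^bsub>R\<^esub>" unfolding cfr e using gci
      by (simp add: Mm.R.l_minus Mm.R.r_neg)
  qed
  define K where "K = {i. cfi m \<rho> i \<noteq> \<zero>\<^bsub>R\<^esub>}"
  have Kf: "finite K" unfolding K_def by (rule cfi_fin[OF \<rho>c])
  have KB: "\<And>i. i \<in> K \<Longrightarrow> i \<in> B \<and> fst i \<le> m" unfolding K_def using cfi_supp[OF \<rho>c] by blast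
  have Klt: "\<forall>i\<in>K. fst i < m"
  proof
    fix i assume i: "i \<in> K"
    then have "fst i \<le> m" using KB by blast
    moreover have "fst i \<noteq> m" using i top0 unfolding K_def by blast
    ultimately show "fst i < m" by simp
  qed
  have Ksub: "K \<subseteq> {i\<in>B. fst i \<le> m}" using KB by blast
  have rK: "cfi m \<rho> \<in> K \<rightarrow> carrier R" using cfi_carr[OF \<rho>c] by blast
  have "\<rho> = \<pi> m (\<iota> m \<rho>)" using retr[OF \<rho>c] by simp
  also have "\<iota> m \<rho> = lc (F m) (vF S m) (cfi m \<rho>) K"
    unfolding cfi_def by (rule cf_repr[OF i_carr[OF \<rho>c] Kf Ksub]) (auto simp: K_def cfi_def)
  also have "\<pi> m (lc (F m) (vF S m) (cfi m \<rho>) K) = lc (M m) (\<lambda>i. \<pi> m (vF S m i)) (cfi m \<rho>) K"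
    by (rule lin_map_lc[OF modF modM lin_p Kf rK vF_Pi[OF Ksub]])
  also have "\<dots> = lc (M m) (\<lambda>i. T (fst i) m (\<pi> (fst i) (snd i))) (cfi m \<rho>) K"
  proof (rule Mm.lc_cong)
    show "(\<lambda>i. T (fst i) m (\<pi> (fst i) (snd i))) \<in> K \<rightarrow> carrier (M m)"
      using KB B_carr p_carr T_carr by blast
    show "\<And>i. i \<in> K \<Longrightarrow> \<pi> m (vF S m i) = T (fst i) m (\<pi> (fst i) (snd i))"
      unfolding vF_def using KB B_carr p_nat by blast
  qed (use rK in auto)
  finally have \<rho>e: "\<rho> = lc (M m) (\<lambda>i. T (fst i) m (\<pi> (fst i) (snd i))) (cfi m \<rho>) K" .
  have "(\<ominus>\<^bsub>R\<^esub> \<one>\<^bsub>R\<^esub>) \<odot>\<^bsub>M m\<^esub> g = \<ominus>\<^bsub>M m\<^esub> g" using gc by (simp add: Mm.smult_l_minus)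
  then have \<rho>2: "\<rho> = z' \<oplus>\<^bsub>M m\<^esub> (\<ominus>\<^bsub>M m\<^esub> g)" unfolding \<rho>_def by simp
  have "g \<oplus>\<^bsub>M m\<^esub> \<rho> = z' \<oplus>\<^bsub>M m\<^esub> (g \<oplus>\<^bsub>M m\<^esub> (\<ominus>\<^bsub>M m\<^esub> g))"
    unfolding \<rho>2 by (rule Mm.M.a_lcomm) (use gc z' in auto)
  also have "\<dots> = z'" using gc z' by (simp add: Mm.M.r_neg)
  finally have "z' = g \<oplus>\<^bsub>M m\<^esub> \<rho>" by simp
  then have "z' = lc (M m) (\<lambda>x. x) c (Gen m) \<oplus>\<^bsub>M m\<^esub> lc (M m) (\<lambda>i. T (fst i) m (\<pi> (fst i) (snd i))) (cfi m \<rho>) K"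
    using \<rho>e unfolding g_def by simp
  then show ?thesis using c(1) Kf KB Klt rK by blast
qed

end


context proj
begin

theorem span_all:
  assumes db: "d \<le> b" and z: "z \<in> carrier (M d)"
  shows "inN d z"
proof -
  define D where "D = fst ` Sb b"
  have Df: "finite D" unfolding D_def using Sb_fin by simp
  define \<mu> where "\<mu> = (\<lambda>d z. Sup_fin (fst ` {i. cfi d z i \<noteq> \<zero>\<^bsub>R\<^esub>}))"
  have main: "\<forall>d z. d \<le> b \<longrightarrow> z \<in> carrier (M d) \<longrightarrow> card {s\<in>D. s \<le> \<mu> d z} < n \<longrightarrow> inN d z" for n
  proof (induction n)
    case 0
    then show ?case by simp
  next
    case (Suc n)
    show ?case
    proof (intro allI impI)
      fix d z assume db: "d \<le> b" and z: "z \<in> carrier (M d)" and cd: "card {s\<in>D. s \<le> \<mu> d z} < Suc n"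
      show "inN d z"
      proof (cases "{i. cfi d z i \<noteq> \<zero>\<^bsub>R\<^esub>} = {}")
        case True
        then have "z = \<zero>\<^bsub>M d\<^esub>" using zero_supp[OF z] by blast
        then show ?thesis using N0 by simp
      next
        case False
        define A where "A = {i. cfi d z i \<noteq> \<zero>\<^bsub>R\<^esub>}"
        define m where "m = Sup_fin (fst ` A)"
        have md: "m \<le> d" using reduce(1)[OF z False] unfolding m_def A_def .
        obtain z' where z': "z' \<in> carrier (M m)" "z = T m d z'"
          using reduce(2)[OF z False] unfolding m_def A_def by blast
        obtain c K r where ckr: "c \<in> Gen m \<rightarrow> carrier R" "finite K" "K \<subseteq> B" "\<forall>i\<in>K. fst i < m"
          "r \<in> K \<rightarrow> carrier R"
          "z' = lc (M m) (\<lambda>x. x) c (Gen m) \<oplus>\<^bsub>M m\<^esub> lc (M m) (\<lambda>i. T (fst i) m (\<pi> (fst i) (snd i))) r K"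
          using decomp[OF z'(1)] by blast
        have Af: "finite A" unfolding A_def by (rule cfi_fin[OF z])
        have Ane: "fst ` A \<noteq> {}" using False A_def by simp
        have FA: "fst ` A \<subseteq> D" unfolding D_def A_def using supp_below[OF db z] by blast
        have cm: "card {s\<in>D. s \<le> m} < Suc n" using cd unfolding \<mu>_def m_def A_def .
        have yi: "inN (fst i) (\<pi> (fst i) (snd i))" if i: "i \<in> K" for i
        proof -
          define y where "y = \<pi> (fst i) (snd i)"
          have yc: "y \<in> carrier (M (fst i))" unfolding y_def using p_carr B_carr i ckr(3) by blast
          have im: "fst i < m" using ckr(4) i by blast
          have ib: "fst i \<le> b" using im md db by simp
          show ?thesis
          proof (cases "{j. cfi (fst i) y j \<noteq> \<zero>\<^bsub>R\<^esub>} = {}")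
            case True
            then have "y = \<zero>\<^bsub>M (fst i)\<^esub>" using zero_supp[OF yc] by blast
            then show ?thesis using N0 y_def by simp
          next
            case False
            have "\<mu> (fst i) y \<le> fst i" unfolding \<mu>_def using reduce(1)[OF yc False] .
            then have "\<mu> (fst i) y < Sup_fin (fst ` A)" using im m_def by simp
            then have "card {s\<in>D. s \<le> \<mu> (fst i) y} < card {s\<in>D. s \<le> Sup_fin (fst ` A)}"
              by (rule card_lt[OF Df finite_imageI[OF Af] Ane FA])
            then have "card {s\<in>D. s \<le> \<mu> (fst i) y} < n" using cm m_def by simp
            then show ?thesis using Suc.IH ib yc y_def by blast
          qed
        qed
        have n1: "inN m (lc (M m) (\<lambda>i. T (fst i) m (\<pi> (fst i) (snd i))) r K)"
        proof (rule N_lc[OF ckr(2) ckr(5)])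
          fix i assume i: "i \<in> K"
          have "fst i \<le> m" using ckr(4) i less_imp_le by blast
          then show "inN m (T (fst i) m (\<pi> (fst i) (snd i)))"
            by (rule N_T[OF _ yi[OF i]])
        qed
        have n2: "inN m (lc (M m) (\<lambda>x. x) c (Gen m))"
          by (rule N_lc[OF Gen_props(1) ckr(1)]) (rule N_gen)
        have "inN m z'" using N_add[OF n2 n1] ckr(6) by simp
        then show ?thesis using N_T[OF md] z'(2) by simp
      qed
    qed
  qed
  then show ?thesis using db z by blast
qed

end


context proj
begin

theorem indep_all:
  assumes Kf: "finite K" and Ks: "K \<subseteq> {k\<in>BM. fst k \<le> b}" and cK: "c \<in> K \<rightarrow> carrier R"
    and z: "lc (M b) (vM b) c K = \<zero>\<^bsub>M b\<^esub>"
  shows "\<forall>k\<in>K. c k = \<zero>\<^bsub>R\<^esub>"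
proof (rule ccontr)
  assume "\<not> (\<forall>k\<in>K. c k = \<zero>\<^bsub>R\<^esub>)"
  then have K'ne: "{k\<in>K. c k \<noteq> \<zero>\<^bsub>R\<^esub>} \<noteq> {}" by blast
  interpret Rr: cring R by (rule cring_R)
  interpret Mb: module R "M b" by (rule modM)
  interpret Fb: module R "F b" by (rule modF)
  have fK': "finite (fst ` {k\<in>K. c k \<noteq> \<zero>\<^bsub>R\<^esub>})" using Kf by simp
  have nK': "fst ` {k\<in>K. c k \<noteq> \<zero>\<^bsub>R\<^esub>} \<noteq> {}" using K'ne by blast
  obtain a0 where a0: "a0 \<in> fst ` {k\<in>K. c k \<noteq> \<zero>\<^bsub>R\<^esub>}"
    "\<forall>a\<in>fst ` {k\<in>K. c k \<noteq> \<zero>\<^bsub>R\<^esub>}. a0 \<le> a \<longrightarrow> a0 = a"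
    using finite_has_maximal[OF fK' nK'] by blast
  have vK: "vM b \<in> K \<rightarrow> carrier (M b)" by (rule vM_Pi[OF Ks])
  have KB: "\<And>k. k \<in> K \<Longrightarrow> snd k \<in> carrier (M (fst k)) \<and> fst k \<le> b \<and> snd k \<in> Gen (fst k)"
    using Ks BM_carr unfolding BM_def by auto
  have iK: "(\<lambda>k. \<iota> b (vM b k)) \<in> K \<rightarrow> carrier (F b)" using vK i_carr by blast
  have "\<iota> b (lc (M b) (vM b) c K) = lc (F b) (\<lambda>k. \<iota> b (vM b k)) c K"
    by (rule lin_map_lc[OF modM modF lin_i Kf cK vK])
  then have l0: "lc (F b) (\<lambda>k. \<iota> b (vM b k)) c K = \<zero>\<^bsub>F b\<^esub>" using z i_zero by simp
  have E: "finsum R (\<lambda>k. c k \<otimes>\<^bsub>R\<^esub> cfi (fst k) (snd k) i) K = \<zero>\<^bsub>R\<^esub>" for i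
  proof -
    have "\<zero>\<^bsub>R\<^esub> = cf b (lc (F b) (\<lambda>k. \<iota> b (vM b k)) c K) i" using l0 cf_zero by simp
    also have "\<dots> = finsum R (\<lambda>k. c k \<otimes>\<^bsub>R\<^esub> cf b (\<iota> b (vM b k)) i) K"
      by (rule cf_lc[OF Kf cK iK])
    also have "\<dots> = finsum R (\<lambda>k. c k \<otimes>\<^bsub>R\<^esub> cfi (fst k) (snd k) i) K"
    proof (rule Rr.finsum_cong')
      show "(\<lambda>k. c k \<otimes>\<^bsub>R\<^esub> cfi (fst k) (snd k) i) \<in> K \<rightarrow> carrier R"
        using cK KB cfi_carr by (auto simp: Pi_iff)
      show "\<And>k. k \<in> K \<Longrightarrow> c k \<otimes>\<^bsub>R\<^esub> cf b (\<iota> b (vM b k)) i = c k \<otimes>\<^bsub>R\<^esub> cfi (fst k) (snd k) i"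
      proof -
        fix k assume k: "k \<in> K"
        have "cf b (\<iota> b (vM b k)) i = cfi b (T (fst k) b (snd k)) i" unfolding cfi_def vM_def ..
        also have "\<dots> = cfi (fst k) (snd k) i" using cfi_nat KB[OF k] by blast
        finally show "c k \<otimes>\<^bsub>R\<^esub> cf b (\<iota> b (vM b k)) i = c k \<otimes>\<^bsub>R\<^esub> cfi (fst k) (snd k) i" by simp
      qed
    qed simp
    finally show ?thesis by simp
  qed
  define c' where "c' = (\<lambda>g. if (a0, g) \<in> K then c (a0, g) else \<zero>\<^bsub>R\<^esub>)"
  have c'c: "c' \<in> Gen a0 \<rightarrow> carrier R" using cK unfolding c'_def by auto
  have phic: "\<And>g i. g \<in> Gen a0 \<Longrightarrow> phi a0 g i \<in> carrier R"
  proof -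
    fix g i assume "g \<in> Gen a0"
    then have "g \<in> carrier (M a0)" using Gen_props(2) by blast
    then show "phi a0 g i \<in> carrier R" unfolding phi_def using cfi_carr by simp
  qed
  have Z: "\<forall>i. finsum R (\<lambda>g. c' g \<otimes>\<^bsub>R\<^esub> phi a0 g i) (Gen a0) = \<zero>\<^bsub>R\<^esub>"
  proof
    fix i :: "'p \<times> 'f"
    show "finsum R (\<lambda>g. c' g \<otimes>\<^bsub>R\<^esub> phi a0 g i) (Gen a0) = \<zero>\<^bsub>R\<^esub>"
    proof (cases "fst i = a0")
      case False
      have "finsum R (\<lambda>g. c' g \<otimes>\<^bsub>R\<^esub> phi a0 g i) (Gen a0) = finsum R (\<lambda>g. \<zero>\<^bsub>R\<^esub>) (Gen a0)"
      proof (rule Rr.finsum_cong')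
        show "\<And>g. g \<in> Gen a0 \<Longrightarrow> c' g \<otimes>\<^bsub>R\<^esub> phi a0 g i = \<zero>\<^bsub>R\<^esub>"
          using c'c False unfolding phi_def by (auto simp: Pi_iff)
      qed auto
      then show ?thesis by simp
    next
      case True
      define Bg where "Bg = (\<lambda>g. (a0, g)) ` Gen a0"
      have "finsum R (\<lambda>k. c' (snd k) \<otimes>\<^bsub>R\<^esub> phi a0 (snd k) i) Bg =
            finsum R (\<lambda>g. c' g \<otimes>\<^bsub>R\<^esub> phi a0 g i) (Gen a0)"
        unfolding Bg_def
        by (subst Rr.finsum_reindex) (use c'c phic in \<open>auto simp: inj_on_def Pi_iff\<close>)
      then have "finsum R (\<lambda>g. c' g \<otimes>\<^bsub>R\<^esub> phi a0 g i) (Gen a0) =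
            finsum R (\<lambda>k. c' (snd k) \<otimes>\<^bsub>R\<^esub> phi a0 (snd k) i) Bg" by (rule sym)
      also have "\<dots> = finsum R (\<lambda>k. c k \<otimes>\<^bsub>R\<^esub> cfi (fst k) (snd k) i) K"
      proof (rule Rr.add.finprod_mono_neutral_cong)
        show "finite Bg" unfolding Bg_def using Gen_props(1) by simp
        show "finite K" by (rule Kf)
        show "\<And>k. k \<in> Bg - K \<Longrightarrow> c' (snd k) \<otimes>\<^bsub>R\<^esub> phi a0 (snd k) i = \<zero>\<^bsub>R\<^esub>"
        proof -
          fix k assume k: "k \<in> Bg - K"
          then obtain g where g: "k = (a0, g)" "g \<in> Gen a0" "(a0, g) \<notin> K" unfolding Bg_def by blast
          have "phi a0 g i \<in> carrier R" by (rule phic[OF g(2)])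
          then show "c' (snd k) \<otimes>\<^bsub>R\<^esub> phi a0 (snd k) i = \<zero>\<^bsub>R\<^esub>" using g by (simp add: c'_def)
        qed
        show "\<And>k. k \<in> K - Bg \<Longrightarrow> c k \<otimes>\<^bsub>R\<^esub> cfi (fst k) (snd k) i = \<zero>\<^bsub>R\<^esub>"
        proof -
          fix k assume k: "k \<in> K - Bg"
          have kK: "k \<in> K" using k by blast
          have ck: "c k \<in> carrier R" using cK kK by blast
          have cc: "cfi (fst k) (snd k) i \<in> carrier R" using cfi_carr KB[OF kK] by blast
          have ne: "fst k \<noteq> a0"
          proof
            assume "fst k = a0"
            then have "k \<in> Bg" unfolding Bg_def using KB[OF kK] by (cases k) auto
            then show False using k by blast
          qed
          show "c k \<otimes>\<^bsub>R\<^esub> cfi (fst k) (snd k) i = \<zero>\<^bsub>R\<^esub>"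
          proof (cases "c k = \<zero>\<^bsub>R\<^esub>")
            case True
            then show ?thesis using cc by simp
          next
            case cnz: False
            have "cfi (fst k) (snd k) i = \<zero>\<^bsub>R\<^esub>"
            proof (rule ccontr)
              assume "cfi (fst k) (snd k) i \<noteq> \<zero>\<^bsub>R\<^esub>"
              then have "fst i \<le> fst k" using cfi_supp KB[OF kK] by blast
              then have "a0 \<le> fst k" using True by simp
              moreover have "fst k \<in> fst ` {k\<in>K. c k \<noteq> \<zero>\<^bsub>R\<^esub>}" using kK cnz by blast
              ultimately have "a0 = fst k" using a0(2) by blast
              then show False using ne by simp
            qed
            then show ?thesis using ck by simp
          qed
        qed
        show "\<And>k. k \<in> Bg \<inter> K \<Longrightarrow> c' (snd k) \<otimes>\<^bsub>R\<^esub> phi a0 (snd k) i = c k \<otimes>\<^bsub>R\<^esub> cfi (fst k) (snd k) i"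
        proof -
          fix k assume k: "k \<in> Bg \<inter> K"
          then obtain g where g: "k = (a0, g)" "g \<in> Gen a0" unfolding Bg_def by blast
          have "c' (snd k) = c k" unfolding c'_def using k g by simp
          moreover have "phi a0 (snd k) i = cfi (fst k) (snd k) i" unfolding phi_def using True g by simp
          ultimately show "c' (snd k) \<otimes>\<^bsub>R\<^esub> phi a0 (snd k) i = c k \<otimes>\<^bsub>R\<^esub> cfi (fst k) (snd k) i" by simp
        qed
        show "(\<lambda>k. c k \<otimes>\<^bsub>R\<^esub> cfi (fst k) (snd k) i) \<in> K \<rightarrow> carrier R"
          using cK KB cfi_carr by (auto simp: Pi_iff)
        show "(\<lambda>k. c' (snd k) \<otimes>\<^bsub>R\<^esub> phi a0 (snd k) i) \<in> Bg \<rightarrow> carrier R"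
          unfolding Bg_def using c'c phic by (auto simp: Pi_iff)
      qed
      also have "\<dots> = \<zero>\<^bsub>R\<^esub>" by (rule E)
      finally show ?thesis .
    qed
  qed
  have allz: "\<forall>g\<in>Gen a0. c' g = \<zero>\<^bsub>R\<^esub>" by (rule Gen_props(4)[OF c'c Z])
  obtain k where k: "k \<in> K" "c k \<noteq> \<zero>\<^bsub>R\<^esub>" "fst k = a0" using a0(1) by blast
  have "snd k \<in> Gen a0" using KB[OF k(1)] k(3) by simp
  moreover have "c' (snd k) = c k" unfolding c'_def using k by (cases k) auto
  ultimately show False using allz k(2) by simp
qed

theorem M_free: "graded_free R M T"
proof -
  have 1: "BM \<subseteq> {(a, x). x \<in> carrier (M a)}" using BM_carr by auto
  have 2: "\<exists>S c. finite S \<and> S \<subseteq> {i \<in> BM. fst i \<le> b} \<and> c \<in> S \<rightarrow> carrier R \<and>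
          y = (\<Oplus>\<^bsub>M b\<^esub>i\<in>S. c i \<odot>\<^bsub>M b\<^esub> T (fst i) b (snd i))" if y: "y \<in> carrier (M b)" for b y
  proof -
    have "inN b y" by (rule span_all[OF order_refl y])
    then show ?thesis unfolding inN_def lc_def vM_def by blast
  qed
  have 3: "\<forall>i\<in>S. c i = \<zero>\<^bsub>R\<^esub>" if h: "finite S" "S \<subseteq> {i \<in> BM. fst i \<le> b}" "c \<in> S \<rightarrow> carrier R"
         "(\<Oplus>\<^bsub>M b\<^esub>i\<in>S. c i \<odot>\<^bsub>M b\<^esub> T (fst i) b (snd i)) = \<zero>\<^bsub>M b\<^esub>" for b S c
  proof -
    have "lc (M b) (vM b) c S = \<zero>\<^bsub>M b\<^esub>" using h(4) unfolding lc_def vM_def .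
    then show ?thesis using indep_all h(1-3) by blast
  qed
  show ?thesis unfolding graded_free_def
    by (rule exI[of _ BM]) (use 1 2 3 in blast)
qed

end


lemma (in module) lc_reindex:
  assumes "inj_on h A" "c \<in> h ` A \<rightarrow> carrier R" "v \<in> h ` A \<rightarrow> carrier M"
  shows "lc M v c (h ` A) = lc M (\<lambda>k. v (h k)) (\<lambda>k. c (h k)) A"
  unfolding lc_def by (rule M.finsum_reindex) (use assms in \<open>auto simp: Pi_iff\<close>)

lemma free_transfer:
  fixes R :: "('r, 'c) ring_scheme"
    and M :: "'p::lattice_ab_group_add \<Rightarrow> ('r, 'm) module"
    and F :: "'p \<Rightarrow> ('r, 'f) module"
  assumes pmM: "persistence_module R M T" and pmF: "persistence_module R F S"
    and frM: "graded_free R M T"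
    and hi: "pmod_hom R M T F S \<iota>" and hp: "pmod_hom R F S M T \<pi>"
    and r1: "\<And>a x. x \<in> carrier (M a) \<Longrightarrow> \<pi> a (\<iota> a x) = x"
    and r2: "\<And>a y. y \<in> carrier (F a) \<Longrightarrow> \<iota> a (\<pi> a y) = y"
  shows "graded_free R F S"
proof -
  have modM: "\<And>a. module R (M a)" using pmM unfolding persistence_module_def by auto
  have modF: "\<And>a. module R (F a)" using pmF unfolding persistence_module_def by auto
  have linT: "\<And>a b. a \<le> b \<Longrightarrow> lin_map R (M a) (M b) (T a b)" using pmM unfolding persistence_module_def by auto
  have linS: "\<And>a b. a \<le> b \<Longrightarrow> lin_map R (F a) (F b) (S a b)" using pmF unfolding persistence_module_def by auto
  have lin_i: "\<And>a. lin_map R (M a) (F a) (\<iota> a)" using hi unfolding pmod_hom_def by auto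
  have lin_p: "\<And>a. lin_map R (F a) (M a) (\<pi> a)" using hp unfolding pmod_hom_def by auto
  have i_nat: "\<And>d b x. d \<le> b \<Longrightarrow> x \<in> carrier (M d) \<Longrightarrow> \<iota> b (T d b x) = S d b (\<iota> d x)"
    using hi unfolding pmod_hom_def by auto
  have p_nat: "\<And>d b x. d \<le> b \<Longrightarrow> x \<in> carrier (F d) \<Longrightarrow> \<pi> b (S d b x) = T d b (\<pi> d x)"
    using hp unfolding pmod_hom_def by auto
  have i_carr: "\<And>a x. x \<in> carrier (M a) \<Longrightarrow> \<iota> a x \<in> carrier (F a)"
    using lin_i unfolding lin_map_def by blast
  have p_carr: "\<And>a x. x \<in> carrier (F a) \<Longrightarrow> \<pi> a x \<in> carrier (M a)"
    using lin_p unfolding lin_map_def by blast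
  have T_carr: "\<And>a b y. a \<le> b \<Longrightarrow> y \<in> carrier (M a) \<Longrightarrow> T a b y \<in> carrier (M b)"
    using linT unfolding lin_map_def by blast
  have S_carr: "\<And>a b y. a \<le> b \<Longrightarrow> y \<in> carrier (F a) \<Longrightarrow> S a b y \<in> carrier (F b)"
    using linS unfolding lin_map_def by blast
  obtain BM where BM: "BM \<subseteq> {(a, x). x \<in> carrier (M a)}"
    and frB: "\<forall>b. (\<forall>y\<in>carrier (M b). \<exists>S c. finite S \<and> S \<subseteq> {i\<in>BM. fst i \<le> b} \<and>
                 c \<in> S \<rightarrow> carrier R \<and>
                 y = finsum (M b) (\<lambda>i. c i \<odot>\<^bsub>M b\<^esub> T (fst i) b (snd i)) S) \<and>
            (\<forall>S c. finite S \<and> S \<subseteq> {i\<in>BM. fst i \<le> b} \<and> c \<in> S \<rightarrow> carrier R \<and>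
                 finsum (M b) (\<lambda>i. c i \<odot>\<^bsub>M b\<^esub> T (fst i) b (snd i)) S = \<zero>\<^bsub>M b\<^esub>
                 \<longrightarrow> (\<forall>i\<in>S. c i = \<zero>\<^bsub>R\<^esub>))"
    using frM unfolding graded_free_def by (elim exE conjE) (rule that)
  have spM: "\<And>b y. y \<in> carrier (M b) \<Longrightarrow> \<exists>S c. finite S \<and> S \<subseteq> {i\<in>BM. fst i \<le> b} \<and>
                 c \<in> S \<rightarrow> carrier R \<and> y = lc (M b) (vF T b) c S"
  proof -
    fix b y assume "y \<in> carrier (M b)"
    then have "\<exists>S c. finite S \<and> S \<subseteq> {i\<in>BM. fst i \<le> b} \<and>
                 c \<in> S \<rightarrow> carrier R \<and>
                 y = finsum (M b) (\<lambda>i. c i \<odot>\<^bsub>M b\<^esub> T (fst i) b (snd i)) S" using frB by blast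
    then show "\<exists>S c. finite S \<and> S \<subseteq> {i\<in>BM. fst i \<le> b} \<and>
                 c \<in> S \<rightarrow> carrier R \<and> y = lc (M b) (vF T b) c S" unfolding lc_def vF_def .
  qed
  have inM: "\<And>b S c. finite S \<Longrightarrow> S \<subseteq> {i\<in>BM. fst i \<le> b} \<Longrightarrow> c \<in> S \<rightarrow> carrier R \<Longrightarrow>
                 lc (M b) (vF T b) c S = \<zero>\<^bsub>M b\<^esub> \<Longrightarrow> \<forall>i\<in>S. c i = \<zero>\<^bsub>R\<^esub>"
  proof -
    fix b S c assume h: "finite S" "S \<subseteq> {i\<in>BM. fst i \<le> b}" "c \<in> S \<rightarrow> carrier R"
      "lc (M b) (vF T b) c S = \<zero>\<^bsub>M b\<^esub>"
    have "finsum (M b) (\<lambda>i. c i \<odot>\<^bsub>M b\<^esub> T (fst i) b (snd i)) S = \<zero>\<^bsub>M b\<^esub>"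
      using h(4) unfolding lc_def vF_def .
    then show "\<forall>i\<in>S. c i = \<zero>\<^bsub>R\<^esub>" using frB h(1-3) by blast
  qed
  have BMc: "\<And>k. k \<in> BM \<Longrightarrow> snd k \<in> carrier (M (fst k))" using BM by auto
  define h where "h = (\<lambda>k. (fst k, \<iota> (fst k) (snd k)))"
  define h' where "h' = (\<lambda>k. (fst k, \<pi> (fst k) (snd k)))"
  have h'h: "\<And>k. k \<in> BM \<Longrightarrow> h' (h k) = k" unfolding h_def h'_def using BMc r1 by auto
  have injh: "inj_on h BM" by (metis h'h inj_on_inverseI)
  define BF where "BF = h ` BM"
  have vFh: "\<And>k b. k \<in> BM \<Longrightarrow> fst k \<le> b \<Longrightarrow> \<iota> b (vF T b k) = vF S b (h k)"
    unfolding vF_def h_def using i_nat BMc by auto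
  have vFh': "\<And>k b. k \<in> BM \<Longrightarrow> fst k \<le> b \<Longrightarrow> \<pi> b (vF S b (h k)) = vF T b k"
    unfolding vF_def h_def using p_nat BMc i_carr r1 by auto
  have vTc: "\<And>k b. k \<in> BM \<Longrightarrow> fst k \<le> b \<Longrightarrow> vF T b k \<in> carrier (M b)"
    unfolding vF_def using T_carr BMc by blast
  have vSc: "\<And>k b. k \<in> BM \<Longrightarrow> fst k \<le> b \<Longrightarrow> vF S b (h k) \<in> carrier (F b)"
    unfolding vF_def h_def using S_carr BMc i_carr by auto
  show ?thesis unfolding graded_free_def
  proof (intro exI[of _ BF] conjI allI)
    show "BF \<subseteq> {(a, x). x \<in> carrier (F a)}" unfolding BF_def h_def using BMc i_carr by auto
  next
    fix b
    interpret Mb: module R "M b" by (rule modM)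
    interpret Fb: module R "F b" by (rule modF)
    show "\<forall>y\<in>carrier (F b). \<exists>S' c. finite S' \<and> S' \<subseteq> {i \<in> BF. fst i \<le> b} \<and> c \<in> S' \<rightarrow> carrier R \<and>
            y = (\<Oplus>\<^bsub>F b\<^esub>i\<in>S'. c i \<odot>\<^bsub>F b\<^esub> S (fst i) b (snd i))"
    proof
      fix y assume y: "y \<in> carrier (F b)"
      obtain S0 c where S0: "finite S0" "S0 \<subseteq> {i\<in>BM. fst i \<le> b}" "c \<in> S0 \<rightarrow> carrier R"
        "\<pi> b y = lc (M b) (vF T b) c S0"
        using spM[OF p_carr[OF y]] by (elim exE conjE) (rule that; assumption)
      have vT0: "vF T b \<in> S0 \<rightarrow> carrier (M b)"
      proof
        fix k assume "k \<in> S0"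
        then have "k \<in> BM" "fst k \<le> b" using S0(2) by auto
        then show "vF T b k \<in> carrier (M b)" by (rule vTc)
      qed
      have inj0: "inj_on h S0" using injh S0(2) inj_on_subset by blast
      define c' where "c' = (\<lambda>k. c (h' k))"
      have c'h: "\<And>k. k \<in> S0 \<Longrightarrow> c' (h k) = c k"
      proof -
        fix k assume "k \<in> S0"
        then have "k \<in> BM" using S0(2) by auto
        then show "c' (h k) = c k" unfolding c'_def using h'h by simp
      qed
      have c'hc: "\<And>k. k \<in> S0 \<Longrightarrow> c' (h k) \<in> carrier R" using c'h S0(3) by auto
      have vSc0: "\<And>k. k \<in> S0 \<Longrightarrow> vF S b (h k) \<in> carrier (F b)"
      proof -
        fix k assume "k \<in> S0"
        then have "k \<in> BM" "fst k \<le> b" using S0(2) by auto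
        then show "vF S b (h k) \<in> carrier (F b)" by (rule vSc)
      qed
      have vFh0: "\<And>k. k \<in> S0 \<Longrightarrow> \<iota> b (vF T b k) = vF S b (h k)"
      proof -
        fix k assume "k \<in> S0"
        then have "k \<in> BM" "fst k \<le> b" using S0(2) by auto
        then show "\<iota> b (vF T b k) = vF S b (h k)" by (rule vFh)
      qed
      have "y = \<iota> b (\<pi> b y)" using r2[OF y] by simp
      also have "\<dots> = lc (F b) (\<lambda>k. \<iota> b (vF T b k)) c S0"
        unfolding S0(4) by (rule lin_map_lc[OF modM modF lin_i S0(1) S0(3) vT0])
      also have "\<dots> = lc (F b) (\<lambda>k. vF S b (h k)) (\<lambda>k. c' (h k)) S0"
        by (rule Fb.lc_cong) (use c'h c'hc vSc0 vFh0 in auto)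
      also have "\<dots> = lc (F b) (vF S b) c' (h ` S0)"
        by (rule Fb.lc_reindex[symmetric, OF inj0]) (use c'hc vSc0 in auto)
      finally have ye: "y = lc (F b) (vF S b) c' (h ` S0)" .
      have "finite (h ` S0)" "h ` S0 \<subseteq> {i \<in> BF. fst i \<le> b}"
        using S0 unfolding BF_def by (auto simp: h_def)
      moreover have "c' \<in> h ` S0 \<rightarrow> carrier R" using c'hc by auto
      ultimately show "\<exists>S' c. finite S' \<and> S' \<subseteq> {i \<in> BF. fst i \<le> b} \<and> c \<in> S' \<rightarrow> carrier R \<and>
            y = (\<Oplus>\<^bsub>F b\<^esub>i\<in>S'. c i \<odot>\<^bsub>F b\<^esub> S (fst i) b (snd i))"
        using ye unfolding lc_def vF_def by blast
    qed
    fix S' c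
    show "finite S' \<and> S' \<subseteq> {i \<in> BF. fst i \<le> b} \<and> c \<in> S' \<rightarrow> carrier R \<and>
         (\<Oplus>\<^bsub>F b\<^esub>i\<in>S'. c i \<odot>\<^bsub>F b\<^esub> S (fst i) b (snd i)) = \<zero>\<^bsub>F b\<^esub> \<longrightarrow> (\<forall>i\<in>S'. c i = \<zero>\<^bsub>R\<^esub>)"
    proof (intro impI)
      assume hyp: "finite S' \<and> S' \<subseteq> {i \<in> BF. fst i \<le> b} \<and> c \<in> S' \<rightarrow> carrier R \<and>
         (\<Oplus>\<^bsub>F b\<^esub>i\<in>S'. c i \<odot>\<^bsub>F b\<^esub> S (fst i) b (snd i)) = \<zero>\<^bsub>F b\<^esub>"
      then have S': "finite S'" "S' \<subseteq> {i \<in> BF. fst i \<le> b}" "c \<in> S' \<rightarrow> carrier R"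
        "lc (F b) (vF S b) c S' = \<zero>\<^bsub>F b\<^esub>" unfolding lc_def vF_def by blast+
      define S0 where "S0 = {k\<in>BM. h k \<in> S'}"
      have hS0: "h ` S0 = S'"
      proof
        show "h ` S0 \<subseteq> S'" unfolding S0_def by blast
        show "S' \<subseteq> h ` S0"
        proof
          fix x assume x: "x \<in> S'"
          then have "x \<in> h ` BM" using S'(2) unfolding BF_def by blast
          then obtain k where k: "k \<in> BM" "x = h k" by blast
          then have "k \<in> S0" unfolding S0_def using x by blast
          then show "x \<in> h ` S0" using k(2) by blast
        qed
      qed
      have S0b: "S0 \<subseteq> {i\<in>BM. fst i \<le> b}"
      proof
        fix k assume "k \<in> S0"
        then have k: "k \<in> BM" "h k \<in> S'" unfolding S0_def by blast+
        then have "fst (h k) \<le> b" using S'(2) by blast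
        then show "k \<in> {i\<in>BM. fst i \<le> b}" using k(1) by (simp add: h_def)
      qed
      have "S0 \<subseteq> BM" unfolding S0_def by blast
      then have inj0: "inj_on h S0" by (rule inj_on_subset[OF injh])
      have fS0: "finite S0" using S'(1) hS0 finite_image_iff[OF inj0] by simp
      have cS': "c \<in> h ` S0 \<rightarrow> carrier R" using S'(3) hS0 by simp
      have cS0: "(\<lambda>k. c (h k)) \<in> S0 \<rightarrow> carrier R" using cS' by blast
      have vS0k: "\<And>k. k \<in> S0 \<Longrightarrow> vF S b (h k) \<in> carrier (F b)"
      proof -
        fix k assume "k \<in> S0"
        then have "k \<in> BM" "fst k \<le> b" using S0b by auto
        then show "vF S b (h k) \<in> carrier (F b)" by (rule vSc)
      qed
      have vS0: "(\<lambda>k. vF S b (h k)) \<in> S0 \<rightarrow> carrier (F b)" using vS0k by blast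
      have vS': "vF S b \<in> h ` S0 \<rightarrow> carrier (F b)" using vS0k by blast
      have "lc (F b) (\<lambda>k. vF S b (h k)) (\<lambda>k. c (h k)) S0 = lc (F b) (vF S b) c (h ` S0)"
        by (rule Fb.lc_reindex[symmetric, OF inj0 cS' vS'])
      then have z: "lc (F b) (\<lambda>k. vF S b (h k)) (\<lambda>k. c (h k)) S0 = \<zero>\<^bsub>F b\<^esub>" using S'(4) hS0 by simp
      have "\<pi> b (lc (F b) (\<lambda>k. vF S b (h k)) (\<lambda>k. c (h k)) S0) = lc (M b) (\<lambda>k. \<pi> b (vF S b (h k))) (\<lambda>k. c (h k)) S0"
        by (rule lin_map_lc[OF modF modM lin_p fS0 cS0 vS0])
      also have "\<dots> = lc (M b) (vF T b) (\<lambda>k. c (h k)) S0"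
      proof (rule Mb.lc_cong)
        show "vF T b \<in> S0 \<rightarrow> carrier (M b)"
        proof
          fix k assume "k \<in> S0"
          then have "k \<in> BM" "fst k \<le> b" using S0b by auto
          then show "vF T b k \<in> carrier (M b)" by (rule vTc)
        qed
        show "\<And>k. k \<in> S0 \<Longrightarrow> \<pi> b (vF S b (h k)) = vF T b k"
        proof -
          fix k assume "k \<in> S0"
          then have "k \<in> BM" "fst k \<le> b" using S0b by auto
          then show "\<pi> b (vF S b (h k)) = vF T b k" by (rule vFh')
        qed
      qed (use cS0 in auto)
      finally have "lc (M b) (vF T b) (\<lambda>k. c (h k)) S0 = \<zero>\<^bsub>M b\<^esub>"
        using z lin_map_zero[OF modF modM lin_p] by simp
      then have "\<forall>k\<in>S0. c (h k) = \<zero>\<^bsub>R\<^esub>" using inM[OF fS0 S0b cS0] by blast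
      then show "\<forall>i\<in>S'. c i = \<zero>\<^bsub>R\<^esub>" using hS0 by blast
    qed
  qed
qed


definition trm :: "('m \<Rightarrow> 'f) \<Rightarrow> ('r, 'm) module \<Rightarrow> ('r, 'f) module" where
  "trm j N = \<lparr>carrier = j ` carrier N, mult = (\<lambda>x y. x), one = j \<one>\<^bsub>N\<^esub>, zero = j \<zero>\<^bsub>N\<^esub>,
     add = (\<lambda>x y. j (inv_into UNIV j x \<oplus>\<^bsub>N\<^esub> inv_into UNIV j y)), smult = (\<lambda>r x. j (r \<odot>\<^bsub>N\<^esub> inv_into UNIV j x))\<rparr>"

lemma trm_simps:
  "carrier (trm j N) = j ` carrier N"
  "x \<oplus>\<^bsub>trm j N\<^esub> y = j (inv_into UNIV j x \<oplus>\<^bsub>N\<^esub> inv_into UNIV j y)"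
  "\<zero>\<^bsub>trm j N\<^esub> = j \<zero>\<^bsub>N\<^esub>"
  "r \<odot>\<^bsub>trm j N\<^esub> x = j (r \<odot>\<^bsub>N\<^esub> inv_into UNIV j x)"
  unfolding trm_def by simp_all

lemma trm_module:
  assumes inj: "inj j" and mN: "module R N"
  shows "module R (trm j N)"
proof -
  interpret N: module R N by (rule mN)
  have ij: "\<And>x. inv_into UNIV j (j x) = x" using inj by (simp add: inv_into_f_f)
  have ag: "abelian_group (trm j N)"
  proof (rule abelian_groupI)
    show "\<And>x y. x \<in> carrier (trm j N) \<Longrightarrow> y \<in> carrier (trm j N) \<Longrightarrow> x \<oplus>\<^bsub>trm j N\<^esub> y \<in> carrier (trm j N)"
      unfolding trm_simps using ij by auto
    show "\<zero>\<^bsub>trm j N\<^esub> \<in> carrier (trm j N)" unfolding trm_simps by simp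
    show "\<And>x y z. x \<in> carrier (trm j N) \<Longrightarrow> y \<in> carrier (trm j N) \<Longrightarrow> z \<in> carrier (trm j N) \<Longrightarrow>
      x \<oplus>\<^bsub>trm j N\<^esub> y \<oplus>\<^bsub>trm j N\<^esub> z = x \<oplus>\<^bsub>trm j N\<^esub> (y \<oplus>\<^bsub>trm j N\<^esub> z)"
      unfolding trm_simps using ij by (auto simp: N.M.a_assoc)
    show "\<And>x y. x \<in> carrier (trm j N) \<Longrightarrow> y \<in> carrier (trm j N) \<Longrightarrow> x \<oplus>\<^bsub>trm j N\<^esub> y = y \<oplus>\<^bsub>trm j N\<^esub> x"
    proof -
      fix x y assume "x \<in> carrier (trm j N)" "y \<in> carrier (trm j N)"
      then obtain a b where ab: "a \<in> carrier N" "b \<in> carrier N" "x = j a" "y = j b" unfolding trm_simps by blast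
      have "a \<oplus>\<^bsub>N\<^esub> b = b \<oplus>\<^bsub>N\<^esub> a" using ab(1,2) by (rule N.M.a_comm)
      then show "x \<oplus>\<^bsub>trm j N\<^esub> y = y \<oplus>\<^bsub>trm j N\<^esub> x" unfolding trm_simps ab(3,4) ij by simp
    qed
    show "\<And>x. x \<in> carrier (trm j N) \<Longrightarrow> \<zero>\<^bsub>trm j N\<^esub> \<oplus>\<^bsub>trm j N\<^esub> x = x"
      unfolding trm_simps using ij by auto
    show "\<And>x. x \<in> carrier (trm j N) \<Longrightarrow> \<exists>y\<in>carrier (trm j N). y \<oplus>\<^bsub>trm j N\<^esub> x = \<zero>\<^bsub>trm j N\<^esub>"
    proof -
      fix x assume "x \<in> carrier (trm j N)"
      then obtain a where a: "a \<in> carrier N" "x = j a" unfolding trm_simps by blast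
      have "j (\<ominus>\<^bsub>N\<^esub> a) \<oplus>\<^bsub>trm j N\<^esub> x = \<zero>\<^bsub>trm j N\<^esub>" unfolding trm_simps a(2) ij using a(1) by (simp add: N.M.l_neg)
      moreover have "j (\<ominus>\<^bsub>N\<^esub> a) \<in> carrier (trm j N)" unfolding trm_simps using a(1) by simp
      ultimately show "\<exists>y\<in>carrier (trm j N). y \<oplus>\<^bsub>trm j N\<^esub> x = \<zero>\<^bsub>trm j N\<^esub>" by blast
    qed
  qed
  show ?thesis
  proof (rule moduleI)
    show "cring R" by (rule N.is_cring)
    show "abelian_group (trm j N)" by (rule ag)
    show "\<And>a x. a \<in> carrier R \<Longrightarrow> x \<in> carrier (trm j N) \<Longrightarrow> a \<odot>\<^bsub>trm j N\<^esub> x \<in> carrier (trm j N)"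
      unfolding trm_simps using ij by auto
    show "\<And>a b x. a \<in> carrier R \<Longrightarrow> b \<in> carrier R \<Longrightarrow> x \<in> carrier (trm j N) \<Longrightarrow>
      (a \<oplus>\<^bsub>R\<^esub> b) \<odot>\<^bsub>trm j N\<^esub> x = a \<odot>\<^bsub>trm j N\<^esub> x \<oplus>\<^bsub>trm j N\<^esub> b \<odot>\<^bsub>trm j N\<^esub> x"
      unfolding trm_simps using ij by (auto simp: N.smult_l_distr)
    show "\<And>a x y. a \<in> carrier R \<Longrightarrow> x \<in> carrier (trm j N) \<Longrightarrow> y \<in> carrier (trm j N) \<Longrightarrow>
      a \<odot>\<^bsub>trm j N\<^esub> (x \<oplus>\<^bsub>trm j N\<^esub> y) = a \<odot>\<^bsub>trm j N\<^esub> x \<oplus>\<^bsub>trm j N\<^esub> a \<odot>\<^bsub>trm j N\<^esub> y"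
      unfolding trm_simps using ij by (auto simp: N.smult_r_distr)
    show "\<And>a b x. a \<in> carrier R \<Longrightarrow> b \<in> carrier R \<Longrightarrow> x \<in> carrier (trm j N) \<Longrightarrow>
      (a \<otimes>\<^bsub>R\<^esub> b) \<odot>\<^bsub>trm j N\<^esub> x = a \<odot>\<^bsub>trm j N\<^esub> (b \<odot>\<^bsub>trm j N\<^esub> x)"
      unfolding trm_simps using ij by (auto simp: N.smult_assoc1)
    show "\<And>x. x \<in> carrier (trm j N) \<Longrightarrow> \<one>\<^bsub>R\<^esub> \<odot>\<^bsub>trm j N\<^esub> x = x"
      unfolding trm_simps using ij by auto
  qed
qed


lemma proj_to_free:
  fixes R :: "('r, 'c) ring_scheme"
    and M :: "'p::lattice_ab_group_add \<Rightarrow> ('r, 'm) module"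
    and T :: "'p \<Rightarrow> 'p \<Rightarrow> 'm \<Rightarrow> 'm"
  assumes pid: "principal_domain R" and pmM: "persistence_module R M T"
    and fg: "\<forall>a. fin_gen R (M a)" and gp: "graded_projective TYPE('f) R M T"
  shows "graded_free R M T"
proof -
  obtain F :: "'p \<Rightarrow> ('r, 'f) module" and S i p where h: "persistence_module R F S" "graded_free R F S"
    "pmod_hom R M T F S i" "pmod_hom R F S M T p" "\<forall>a. \<forall>x\<in>carrier (M a). p a (i a x) = x"
    using gp unfolding graded_projective_def by (elim exE conjE) (rule that; assumption)
  obtain B where B: "B \<subseteq> {(a, x). x \<in> carrier (F a)}"
    and frB: "\<forall>b. (\<forall>y\<in>carrier (F b). \<exists>S' c. finite S' \<and> S' \<subseteq> {i\<in>B. fst i \<le> b} \<and>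
                 c \<in> S' \<rightarrow> carrier R \<and>
                 y = finsum (F b) (\<lambda>i. c i \<odot>\<^bsub>F b\<^esub> S (fst i) b (snd i)) S') \<and>
            (\<forall>S' c. finite S' \<and> S' \<subseteq> {i\<in>B. fst i \<le> b} \<and> c \<in> S' \<rightarrow> carrier R \<and>
                 finsum (F b) (\<lambda>i. c i \<odot>\<^bsub>F b\<^esub> S (fst i) b (snd i)) S' = \<zero>\<^bsub>F b\<^esub>
                 \<longrightarrow> (\<forall>i\<in>S'. c i = \<zero>\<^bsub>R\<^esub>))"
    using h(2) unfolding graded_free_def by (elim exE conjE) (rule that; assumption)
  have gf: "gfree R F S B"
  proof (rule gfree.intro)
    show "persistence_module R F S" by (rule h(1))
    show "B \<subseteq> {(a, x). x \<in> carrier (F a)}" by (rule B)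
    show "\<And>b y. y \<in> carrier (F b) \<Longrightarrow> \<exists>S' c. finite S' \<and> S' \<subseteq> {i\<in>B. fst i \<le> b} \<and>
                 c \<in> S' \<rightarrow> carrier R \<and> y = lc (F b) (vF S b) c S'"
    proof -
      fix b y assume "y \<in> carrier (F b)"
      then have "\<exists>S' c. finite S' \<and> S' \<subseteq> {i\<in>B. fst i \<le> b} \<and>
                 c \<in> S' \<rightarrow> carrier R \<and>
                 y = finsum (F b) (\<lambda>i. c i \<odot>\<^bsub>F b\<^esub> S (fst i) b (snd i)) S'" using frB by blast
      then show "\<exists>S' c. finite S' \<and> S' \<subseteq> {i\<in>B. fst i \<le> b} \<and>
                 c \<in> S' \<rightarrow> carrier R \<and> y = lc (F b) (vF S b) c S'" unfolding lc_def vF_def .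
    qed
    show "\<And>b S' c. finite S' \<Longrightarrow> S' \<subseteq> {i\<in>B. fst i \<le> b} \<Longrightarrow> c \<in> S' \<rightarrow> carrier R \<Longrightarrow>
                 lc (F b) (vF S b) c S' = \<zero>\<^bsub>F b\<^esub> \<Longrightarrow> \<forall>i\<in>S'. c i = \<zero>\<^bsub>R\<^esub>"
    proof -
      fix b S' c assume hh: "finite S'" "S' \<subseteq> {i\<in>B. fst i \<le> b}" "c \<in> S' \<rightarrow> carrier R"
        "lc (F b) (vF S b) c S' = \<zero>\<^bsub>F b\<^esub>"
      have "finsum (F b) (\<lambda>i. c i \<odot>\<^bsub>F b\<^esub> S (fst i) b (snd i)) S' = \<zero>\<^bsub>F b\<^esub>"
        using hh(4) unfolding lc_def vF_def .
      then show "\<forall>i\<in>S'. c i = \<zero>\<^bsub>R\<^esub>" using frB hh(1-3) by blast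
    qed
  qed
  have pr: "proj R F S B M T i p"
  proof (rule proj.intro[OF gf])
    show "proj_axioms R F S M T i p"
      by (rule proj_axioms.intro) (use pid pmM fg h(3-5) in auto)
  qed
  show ?thesis by (rule proj.M_free[OF pr])
qed

lemma free_to_proj:
  fixes R :: "('r, 'c) ring_scheme"
    and M :: "'p::lattice_ab_group_add \<Rightarrow> ('r, 'm) module"
    and T :: "'p \<Rightarrow> 'p \<Rightarrow> 'm \<Rightarrow> 'm"
  assumes pid: "principal_domain R" and pmM: "persistence_module R M T"
    and ex: "\<exists>g :: ('p \<times> 'm \<Rightarrow> 'r) \<Rightarrow> 'f. inj g" and fr: "graded_free R M T"
  shows "graded_projective TYPE('f) R M T"
proof -
  interpret pd: principal_domain R by (rule pid)
  obtain g :: "('p \<times> 'm \<Rightarrow> 'r) \<Rightarrow> 'f" where g: "inj g" using ex by blast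
  define j :: "'m \<Rightarrow> 'f" where "j = (\<lambda>x. g (\<lambda>q. if snd q = x then \<one>\<^bsub>R\<^esub> else \<zero>\<^bsub>R\<^esub>))"
  have inj: "inj j"
  proof (rule injI)
    fix x y assume "j x = j y"
    then have e: "(\<lambda>q::'p \<times> 'm. if snd q = x then \<one>\<^bsub>R\<^esub> else \<zero>\<^bsub>R\<^esub>) = (\<lambda>q. if snd q = y then \<one>\<^bsub>R\<^esub> else \<zero>\<^bsub>R\<^esub>)"
      unfolding j_def using g by (simp add: inj_eq)
    have "(if snd (undefined :: 'p, x) = x then \<one>\<^bsub>R\<^esub> else \<zero>\<^bsub>R\<^esub>) = (if snd (undefined :: 'p, x) = y then \<one>\<^bsub>R\<^esub> else \<zero>\<^bsub>R\<^esub>)"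
      using fun_cong[OF e, of "(undefined, x)"] by simp
    then show "x = y" using pd.one_not_zero by (auto split: if_splits)
  qed
  define ij where "ij = inv_into UNIV j"
  have ijj: "\<And>x. ij (j x) = x" unfolding ij_def using inj by (simp add: inv_into_f_f)
  define F where "F = (\<lambda>a. trm j (M a))"
  define S where "S = (\<lambda>a b x. j (T a b (ij x)))"
  define \<iota> where "\<iota> = (\<lambda>(a::'p) x. j x)"
  define \<pi> where "\<pi> = (\<lambda>(a::'p) y. ij y)"
  have modM: "\<And>a. module R (M a)" using pmM unfolding persistence_module_def by auto
  have linT: "\<And>a b. a \<le> b \<Longrightarrow> lin_map R (M a) (M b) (T a b)" using pmM unfolding persistence_module_def by auto
  have Tid: "\<And>a x. x \<in> carrier (M a) \<Longrightarrow> T a a x = x" using pmM unfolding persistence_module_def by auto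
  have Tcomp: "\<And>a b c x. a \<le> b \<Longrightarrow> b \<le> c \<Longrightarrow> x \<in> carrier (M a) \<Longrightarrow> T b c (T a b x) = T a c x"
    using pmM unfolding persistence_module_def by auto
  have modF: "\<And>a. module R (F a)" unfolding F_def using trm_module[OF inj modM] by blast
  have cF: "\<And>a. carrier (F a) = j ` carrier (M a)" unfolding F_def trm_simps by simp
  have aF: "\<And>a x y. x \<oplus>\<^bsub>F a\<^esub> y = j (ij x \<oplus>\<^bsub>M a\<^esub> ij y)" unfolding F_def trm_simps ij_def by simp
  have sF: "\<And>a r x. r \<odot>\<^bsub>F a\<^esub> x = j (r \<odot>\<^bsub>M a\<^esub> ij x)" unfolding F_def trm_simps ij_def by simp
  have pmF: "persistence_module R F S"
    unfolding persistence_module_def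
  proof (intro conjI allI impI ballI)
    show "\<And>a. module R (F a)" by (rule modF)
  next
    fix a b :: 'p assume ab: "a \<le> b"
    have l: "lin_map R (M a) (M b) (T a b)" by (rule linT[OF ab])
    show "lin_map R (F a) (F b) (S a b)"
      unfolding lin_map_def
    proof (intro conjI ballI)
      show "S a b \<in> carrier (F a) \<rightarrow> carrier (F b)"
        unfolding cF S_def using l ijj unfolding lin_map_def by auto
      show "\<And>x y. x \<in> carrier (F a) \<Longrightarrow> y \<in> carrier (F a) \<Longrightarrow> S a b (x \<oplus>\<^bsub>F a\<^esub> y) = S a b x \<oplus>\<^bsub>F b\<^esub> S a b y"
        unfolding cF aF S_def using l ijj modM unfolding lin_map_def by (auto simp: module.axioms)
      show "\<And>r x. r \<in> carrier R \<Longrightarrow> x \<in> carrier (F a) \<Longrightarrow> S a b (r \<odot>\<^bsub>F a\<^esub> x) = r \<odot>\<^bsub>F b\<^esub> S a b x"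
        unfolding cF sF S_def using l ijj unfolding lin_map_def by auto
    qed
  next
    fix a x assume "x \<in> carrier (F a)"
    then show "S a a x = x" unfolding cF S_def using Tid ijj by auto
  next
    fix a b c x assume "a \<le> b" "b \<le> c" "x \<in> carrier (F a)"
    then show "S b c (S a b x) = S a c x" unfolding cF S_def using Tcomp ijj by auto
  qed
  have hi: "pmod_hom R M T F S \<iota>"
    unfolding pmod_hom_def lin_map_def
  proof (intro conjI allI impI ballI)
    show "\<And>a. \<iota> a \<in> carrier (M a) \<rightarrow> carrier (F a)" unfolding \<iota>_def cF by auto
    show "\<And>a x y. x \<in> carrier (M a) \<Longrightarrow> y \<in> carrier (M a) \<Longrightarrow> \<iota> a (x \<oplus>\<^bsub>M a\<^esub> y) = \<iota> a x \<oplus>\<^bsub>F a\<^esub> \<iota> a y"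
      unfolding \<iota>_def aF ijj by simp
    show "\<And>a r x. r \<in> carrier R \<Longrightarrow> x \<in> carrier (M a) \<Longrightarrow> \<iota> a (r \<odot>\<^bsub>M a\<^esub> x) = r \<odot>\<^bsub>F a\<^esub> \<iota> a x"
      unfolding \<iota>_def sF ijj by simp
    show "\<And>a b x. a \<le> b \<Longrightarrow> x \<in> carrier (M a) \<Longrightarrow> \<iota> b (T a b x) = S a b (\<iota> a x)"
      unfolding \<iota>_def S_def ijj by simp
  qed
  have hp: "pmod_hom R F S M T \<pi>"
    unfolding pmod_hom_def lin_map_def
  proof (intro conjI allI impI ballI)
    show "\<And>a. \<pi> a \<in> carrier (F a) \<rightarrow> carrier (M a)" unfolding \<pi>_def cF using ijj by auto
    show "\<And>a x y. x \<in> carrier (F a) \<Longrightarrow> y \<in> carrier (F a) \<Longrightarrow> \<pi> a (x \<oplus>\<^bsub>F a\<^esub> y) = \<pi> a x \<oplus>\<^bsub>M a\<^esub> \<pi> a y"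
      unfolding \<pi>_def aF ijj by simp
    show "\<And>a r x. r \<in> carrier R \<Longrightarrow> x \<in> carrier (F a) \<Longrightarrow> \<pi> a (r \<odot>\<^bsub>F a\<^esub> x) = r \<odot>\<^bsub>M a\<^esub> \<pi> a x"
      unfolding \<pi>_def sF ijj by simp
    show "\<And>a b x. a \<le> b \<Longrightarrow> x \<in> carrier (F a) \<Longrightarrow> \<pi> b (S a b x) = T a b (\<pi> a x)"
      unfolding \<pi>_def S_def ijj by simp
  qed
  have r1: "\<And>a x. x \<in> carrier (M a) \<Longrightarrow> \<pi> a (\<iota> a x) = x" unfolding \<pi>_def \<iota>_def ijj by simp
  have r2: "\<And>a y. y \<in> carrier (F a) \<Longrightarrow> \<iota> a (\<pi> a y) = y" unfolding \<pi>_def \<iota>_def cF using ijj by auto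
  have gF: "graded_free R F S" by (rule free_transfer[OF pmM pmF fr hi hp r1 r2])
  show ?thesis unfolding graded_projective_def
    by (intro exI[of _ F] exI[of _ S] exI[of _ \<iota>] exI[of _ \<pi>] conjI pmF gF hi hp ballI allI r1)
qed

theorem theorem1p2:
  fixes R :: "('r, 'c) ring_scheme"
    and M :: "'p::lattice_ab_group_add \<Rightarrow> ('r, 'm) module"
    and T :: "'p \<Rightarrow> 'p \<Rightarrow> 'm \<Rightarrow> 'm"
  assumes "principal_domain R"
    and "persistence_module R M T"
    and "\<forall>a. fin_gen R (M a)"
    and "\<exists>g :: ('p \<times> 'm \<Rightarrow> 'r) \<Rightarrow> 'f. inj g"
  shows "graded_projective TYPE('f) R M T \<longleftrightarrow> graded_free R M T"
  using proj_to_free[OF assms(1-3)] free_to_proj[OF assms(1,2,4)] by blast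


end
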